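(* Let $Q\in R$ and let $a,b,c,d$ be non-negative integers with $a+b\le n$ and $1\le c\le d\le b$. Then there exist elements $h_k\in H_{k-1,k}$ ($a+c\le k\le a+d$) such that $$T_{w_{a,b}}L_{c,d}(Q)=\Big\{L_{a+c,a+d}(Q)+\sum_{k=a+c}^{a+d}L_kh_k\Big\}T_{w_{a,b}}.$$
   Context: Ariki–Koike algebra: $R$ a commutative integral domain with $1$, $n,r\ge1$, $q,Q_1,\dots,Q_r\in R$, $q$ invertible; generators $T_0,\dots,T_{n-1}$, relations $(T_0-Q_1)\cdots(T_0-Q_r)=0$, $T_0T_1T_0T_1=T_1T_0T_1T_0$, $(T_i+q)(T_i-1)=0$ ($1\le i\le n-1$), $T_{i+1}T_iT_{i+1}=T_iT_{i+1}T_i$, $T_iT_j=T_jT_i$ ($0\le i<j-1\le n-2$). $T_w=T_{i_1}\cdots T_{i_k}$ for a reduced expression $w=s_{i_1}\cdots s_{i_k}$, $s_i=(i,i+1)$. $L_m=q^{1-m}T_{m-1}\cdots T_1T_0T_1\cdots T_{m-1}$. Notation: for $i\le j$, $T_{i,j}=T_iT_{i+1}\cdots T_j$, and $T_{i,j}=1$ if $i>j$. $T_{w_{a,b}}=T_{a,a+b-1}T_{a-1,a+b-2}\cdots T_{1,b}$ (and $T_{w_{a,b}}=1$ if $a=0$ or $b=0$); this is $T_w$ for the permutation $w_{a,b}$ sending $i\mapsto b+i$ for $1\le i\le a$ and $a+i\mapsto i$ for $1\le i\le b$, the product of the $s_{i,j}=s_is_{i+1}\cdots s_j$ being reduced. For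 $Q\in R$, $L_{i,j}(Q)=(L_i-Q)(L_{i+1}-Q)\cdots(L_j-Q)$ if $i\le j$ and $1$ if $i>j$. For $0\le k\le m\le n$, $H_{k,m}$ is the $R$-span of $\{L_1^{c_1}\cdots L_k^{c_k}T_w:0\le c_i<r,\ w\in\mathfrak S_m\}$, where $\mathfrak S_m\subseteq\mathfrak S_n$ is generated by $s_1,\dots,s_{m-1}$. *)

theory Defs
  imports "HOL-Combinatorics.Permutations" "HOL-Combinatorics.Transposition"
begin

text \<open>An R-algebra A is modelled as a ring A together with a ring homomorphism
  emb : R -> A whose image is central.  The Ariki-Koike algebra is the universal
  such algebra with elements T_0..T_{n-1} satisfying the defining relations; we
  state the result for every R-algebra with elements satisfying the relations
  (which is equivalent, by universality).\<close>

definition central_emb :: "('r::comm_ring_1 \<Rightarrow> 'a::ring_1) \<Rightarrow> bool" where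
  "central_emb emb \<longleftrightarrow> emb 1 = 1 \<and> (\<forall>x y. emb (x + y) = emb x + emb y)
     \<and> (\<forall>x y. emb (x * y) = emb x * emb y) \<and> (\<forall>x z. emb x * z = z * emb x)"

definition lprod :: "'a::monoid_mult list \<Rightarrow> 'a" where
  "lprod xs = foldr (*) xs 1"

definition rspan :: "('r \<Rightarrow> 'a::ring_1) \<Rightarrow> 'a set \<Rightarrow> 'a set" where
  "rspan emb S = {x. \<exists>F g. finite F \<and> F \<subseteq> S \<and> x = (\<Sum>y\<in>F. emb (g y) * y)}"

definition AK_rels :: "('r::comm_ring_1 \<Rightarrow> 'a::ring_1) \<Rightarrow> nat \<Rightarrow> nat \<Rightarrow> 'r \<Rightarrow> 'r \<Rightarrow> (nat \<Rightarrow> 'r)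
    \<Rightarrow> (nat \<Rightarrow> 'a) \<Rightarrow> bool" where
  "AK_rels emb n r q qinv Qs T \<longleftrightarrow>
     central_emb emb \<and> q * qinv = 1 \<and>
     lprod (map (\<lambda>j. T 0 - emb (Qs j)) [1..<r+1]) = 0 \<and>
     T 0 * T 1 * T 0 * T 1 = T 1 * T 0 * T 1 * T 0 \<and>
     (\<forall>i. 1 \<le> i \<and> i \<le> n - 1 \<longrightarrow> (T i + emb q) * (T i - 1) = 0) \<and>
     (\<forall>i. 1 \<le> i \<and> i \<le> n - 2 \<longrightarrow> T (i+1) * T i * T (i+1) = T i * T (i+1) * T i) \<and>
     (\<forall>i j. i + 1 < j \<and> j \<le> n - 1 \<longrightarrow> T i * T j = T j * T i)"

definition AK_L :: "('r::comm_ring_1 \<Rightarrow> 'a::ring_1) \<Rightarrow> 'r \<Rightarrow> (nat \<Rightarrow> 'a) \<Rightarrow> nat \<Rightarrow> 'a" where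
  "AK_L emb qinv T m = emb (qinv ^ (m - 1)) *
     lprod (map T (rev [1..<m] @ [0] @ [1..<m]))"

definition Tij :: "(nat \<Rightarrow> 'a::monoid_mult) \<Rightarrow> nat \<Rightarrow> nat \<Rightarrow> 'a" where
  "Tij T i j = lprod (map T [i..<j+1])"

text \<open>T_{w_{a,b}} = T_{a,a+b-1} T_{a-1,a+b-2} ... T_{1,b}.\<close>
definition Twab :: "(nat \<Rightarrow> 'a::monoid_mult) \<Rightarrow> nat \<Rightarrow> nat \<Rightarrow> 'a" where
  "Twab T a b = (if a = 0 \<or> b = 0 then 1
     else lprod (map (\<lambda>t. Tij T (a - t) (a + b - 1 - t)) [0..<a]))"

definition Lij :: "('r::comm_ring_1 \<Rightarrow> 'a::ring_1) \<Rightarrow> 'r \<Rightarrow> (nat \<Rightarrow> 'a) \<Rightarrow> nat \<Rightarrow> nat \<Rightarrow> 'r \<Rightarrow> 'a" where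
  "Lij emb qinv T i j Q = lprod (map (\<lambda>k. AK_L emb qinv T k - emb Q) [i..<j+1])"

definition perm_of_word :: "nat list \<Rightarrow> nat \<Rightarrow> nat" where
  "perm_of_word ws = foldr (\<lambda>i f. transpose i (Suc i) \<circ> f) ws id"

definition reduced_word :: "nat \<Rightarrow> (nat \<Rightarrow> nat) \<Rightarrow> nat list \<Rightarrow> bool" where
  "reduced_word n w ws \<longleftrightarrow> set ws \<subseteq> {1..<n} \<and> perm_of_word ws = w \<and>
     (\<forall>vs. set vs \<subseteq> {1..<n} \<and> perm_of_word vs = w \<longrightarrow> length ws \<le> length vs)"

definition Tw :: "nat \<Rightarrow> (nat \<Rightarrow> 'a::monoid_mult) \<Rightarrow> (nat \<Rightarrow> nat) \<Rightarrow> 'a" where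
  "Tw n T w = lprod (map T (SOME ws. reduced_word n w ws))"

definition Hkm :: "('r::comm_ring_1 \<Rightarrow> 'a::ring_1) \<Rightarrow> nat \<Rightarrow> nat \<Rightarrow> 'r \<Rightarrow> (nat \<Rightarrow> 'a)
    \<Rightarrow> nat \<Rightarrow> nat \<Rightarrow> 'a set" where
  "Hkm emb n r qinv T k m = rspan emb
     {lprod (map (\<lambda>i. AK_L emb qinv T i ^ c i) [1..<k+1]) * Tw n T w | c w.
        (\<forall>i\<in>{1..k}. c i < r) \<and> w permutes {1..m}}"

end

theory Submission
  imports Defs
begin


abbreviation sw :: "nat \<Rightarrow> nat \<Rightarrow> nat" where "sw i \<equiv> transpose i (Suc i)"

definition Invs :: "nat \<Rightarrow> (nat \<Rightarrow> nat) \<Rightarrow> (nat \<times> nat) set" where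
  "Invs n w = {(p,q). p \<in> {1..n} \<and> q \<in> {1..n} \<and> p < q \<and> w q < w p}"

definition Ninv :: "nat \<Rightarrow> (nat \<Rightarrow> nat) \<Rightarrow> nat" where
  "Ninv n w = card (Invs n w)"

lemma finite_Invs: "finite (Invs n w)"
  by (rule finite_subset[of _ "{1..n} \<times> {1..n}"]) (auto simp: Invs_def)

lemma perm_of_word_Nil[simp]: "perm_of_word [] = id"
  by (simp add: perm_of_word_def)

lemma perm_of_word_Cons[simp]: "perm_of_word (i # ws) = sw i \<circ> perm_of_word ws"
  by (simp add: perm_of_word_def)

lemma perm_of_word_permutes:
  "set ws \<subseteq> {1..<n} \<Longrightarrow> perm_of_word ws permutes {1..n}"
proof (induction ws)
  case Nil then show ?case by (simp only: perm_of_word_Nil permutes_id)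
next
  case (Cons i ws)
  have "sw i permutes {1..n}" using Cons.prems by (intro permutes_swap_id) auto
  moreover have "perm_of_word ws permutes {1..n}" using Cons by auto
  ultimately show ?case by (simp only: perm_of_word_Cons permutes_compose)
qed

lemma sw_order:
  assumes "x \<noteq> y" "\<not> (x = i \<and> y = Suc i)" "\<not> (x = Suc i \<and> y = i)"
  shows "(sw i x < sw i y) \<longleftrightarrow> x < y"
  using assms by (auto simp: transpose_def)

lemma Ninv_step:
  assumes w: "w permutes {1..n}" and i: "1 \<le> i" "i < n"
  shows "inv w (Suc i) < inv w i \<Longrightarrow> Ninv n (sw i \<circ> w) + 1 = Ninv n w"
    and "\<not> inv w (Suc i) < inv w i \<Longrightarrow> Ninv n (sw i \<circ> w) = Ninv n w + 1"
proof -
  define p0 where "p0 = inv w i"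
  define p1 where "p1 = inv w (Suc i)"
  have wp0: "w p0 = i" and wp1: "w p1 = Suc i"
    unfolding p0_def p1_def using permutes_inverses(1)[OF w] by auto
  have inj: "\<And>x y. w x = w y \<Longrightarrow> x = y" using permutes_inj[OF w] by (auto dest: injD)
  have "inv w permutes {1..n}" using permutes_inv[OF w] .
  then have p0n: "p0 \<in> {1..n}" and p1n: "p1 \<in> {1..n}" unfolding p0_def p1_def
    using i permutes_in_image[OF \<open>inv w permutes {1..n}\<close>] by auto
  have p01: "p0 \<noteq> p1" using wp0 wp1 by auto
  have key: "\<And>p q. p \<noteq> q \<Longrightarrow> \<not> (p = p0 \<and> q = p1) \<Longrightarrow> \<not> (p = p1 \<and> q = p0) \<Longrightarrow>
      (sw i (w q) < sw i (w p)) \<longleftrightarrow> (w q < w p)"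
  proof -
    fix p q assume a: "p \<noteq> q" "\<not> (p = p0 \<and> q = p1)" "\<not> (p = p1 \<and> q = p0)"
    show "(sw i (w q) < sw i (w p)) \<longleftrightarrow> (w q < w p)"
    proof (rule sw_order)
      show "w q \<noteq> w p" using a inj by metis
      show "\<not> (w q = i \<and> w p = Suc i)" using a inj wp0 wp1 by metis
      show "\<not> (w q = Suc i \<and> w p = i)" using a inj wp0 wp1 by metis
    qed
  qed
  {
    assume d: "inv w (Suc i) < inv w i"
    then have lt: "p1 < p0" by (simp add: p0_def p1_def)
    have eq: "Invs n (sw i \<circ> w) = Invs n w - {(p1,p0)}"
    proof (rule set_eqI, clarify)
      fix p q
      show "(p,q) \<in> Invs n (sw i \<circ> w) \<longleftrightarrow> (p,q) \<in> Invs n w - {(p1,p0)}"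
      proof (cases "p = p1 \<and> q = p0")
        case True then show ?thesis using lt wp0 wp1 by (simp add: Invs_def)
      next
        case F1: False
        show ?thesis
        proof (cases "p = p0 \<and> q = p1")
          case True then show ?thesis using lt by (simp add: Invs_def)
        next
          case False
          then show ?thesis using F1 key[of p q] by (auto simp: Invs_def)
        qed
      qed
    qed
    have mem: "(p1,p0) \<in> Invs n w" unfolding Invs_def using lt wp0 wp1 p0n p1n by auto
    show "Ninv n (sw i \<circ> w) + 1 = Ninv n w"
      unfolding Ninv_def eq using mem finite_Invs[of n w]
      by (simp add: card_Diff_singleton) (metis card_0_eq empty_iff Suc_pred' not_gr0 One_nat_def)
  }
  {
    assume d: "\<not> inv w (Suc i) < inv w i"
    then have lt: "p0 < p1" using p01 by (simp add: p0_def p1_def)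
    have eq: "Invs n (sw i \<circ> w) = insert (p0,p1) (Invs n w)"
    proof (rule set_eqI, clarify)
      fix p q
      show "(p,q) \<in> Invs n (sw i \<circ> w) \<longleftrightarrow> (p,q) \<in> insert (p0,p1) (Invs n w)"
      proof (cases "p = p0 \<and> q = p1")
        case True then show ?thesis using lt wp0 wp1 p0n p1n by (simp add: Invs_def)
      next
        case F1: False
        show ?thesis
        proof (cases "p = p1 \<and> q = p0")
          case True then show ?thesis using lt by (auto simp: Invs_def)
        next
          case False
          then show ?thesis using F1 key[of p q] by (auto simp: Invs_def)
        qed
      qed
    qed
    have mem: "(p0,p1) \<notin> Invs n w" unfolding Invs_def using lt wp0 wp1 by auto
    show "Ninv n (sw i \<circ> w) = Ninv n w + 1"
      unfolding Ninv_def eq using mem finite_Invs[of n w] by simp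
  }
qed

lemma Ninv_id[simp]: "Ninv n id = 0"
proof -
  have "Invs n id = {}" by (auto simp: Invs_def)
  then show ?thesis by (simp add: Ninv_def)
qed

lemma Ninv_word_le:
  "set ws \<subseteq> {1..<n} \<Longrightarrow> Ninv n (perm_of_word ws) \<le> length ws"
proof (induction ws)
  case Nil then show ?case by (simp only: perm_of_word_Nil Ninv_id)
next
  case (Cons i ws)
  have p: "perm_of_word ws permutes {1..n}" using Cons.prems by (intro perm_of_word_permutes) auto
  have i: "1 \<le> i" "i < n" using Cons.prems by auto
  have "Ninv n (sw i \<circ> perm_of_word ws) \<le> Ninv n (perm_of_word ws) + 1"
    using Ninv_step[OF p i] by (cases "inv (perm_of_word ws) (Suc i) < inv (perm_of_word ws) i") auto
  moreover have "Ninv n (perm_of_word ws) \<le> length ws" using Cons by auto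
  ultimately show ?case unfolding perm_of_word_Cons length_Cons by linarith
qed

lemma mono_fix:
  assumes f1: "\<forall>x\<in>{1..n}. f x \<in> {1..n}" and f2: "\<forall>i. 1 \<le> i \<and> i < n \<longrightarrow> f i < f (Suc i)"
    and x: "x \<in> {1..n}"
  shows "f x = x"
proof -
  have ge: "\<forall>x. 1 \<le> x \<longrightarrow> x \<le> n \<longrightarrow> x \<le> f x"
  proof
    fix x show "1 \<le> x \<longrightarrow> x \<le> n \<longrightarrow> x \<le> f x"
    proof (induction x)
      case 0 then show ?case by simp
    next
      case (Suc x)
      show ?case
      proof (cases "x = 0")
        case True then show ?thesis using f1 by auto
      next
        case False
        then show ?thesis using Suc f2[rule_format, of x] by auto
      qed
    qed
  qed
  have le: "\<forall>k. k < n \<longrightarrow> f (n - k) \<le> n - k"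
  proof
    fix k show "k < n \<longrightarrow> f (n - k) \<le> n - k"
    proof (induction k)
      case 0 then show ?case using f1 by auto
    next
      case (Suc k)
      show ?case
      proof
        assume k: "Suc k < n"
        have "f (n - Suc k) < f (Suc (n - Suc k))" using f2 k by auto
        moreover have "Suc (n - Suc k) = n - k" using k by auto
        ultimately show "f (n - Suc k) \<le> n - Suc k" using Suc k by auto
      qed
    qed
  qed
  have "n - x < n" using x by auto
  then have "f (n - (n - x)) \<le> n - (n - x)" using le by blast
  then show ?thesis using ge x by auto
qed

lemma no_descent_id:
  assumes w: "w permutes {1..n}" and nd: "\<forall>i. 1 \<le> i \<and> i < n \<longrightarrow> \<not> inv w (Suc i) < inv w i"
  shows "w = id"
proof -
  have wi: "inv w permutes {1..n}" using permutes_inv[OF w] .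
  have f1: "\<forall>x\<in>{1..n}. inv w x \<in> {1..n}" using permutes_in_image[OF wi] by auto
  have injI: "\<And>x y. inv w x = inv w y \<Longrightarrow> x = y" using permutes_inj[OF wi] by (auto dest: injD)
  have f2: "\<forall>i. 1 \<le> i \<and> i < n \<longrightarrow> inv w i < inv w (Suc i)"
  proof (intro allI impI)
    fix i assume "1 \<le> i \<and> i < n"
    then have "\<not> inv w (Suc i) < inv w i" using nd by auto
    moreover have "inv w (Suc i) \<noteq> inv w i" using injI by fastforce
    ultimately show "inv w i < inv w (Suc i)" by auto
  qed
  show ?thesis
  proof
    fix x
    show "w x = id x"
    proof (cases "x \<in> {1..n}")
      case True
      then have "inv w x = x" using mono_fix[OF f1 f2] by auto
      then show ?thesis using permutes_inverses(1)[OF w, of x] by simp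
    next
      case False then show ?thesis using w by (simp add: permutes_not_in)
    qed
  qed
qed

lemma exists_word:
  assumes "w permutes {1..n}"
  shows "\<exists>ws. set ws \<subseteq> {1..<n} \<and> perm_of_word ws = w \<and> length ws = Ninv n w"
  using assms
proof (induction "Ninv n w" arbitrary: w rule: less_induct)
  case less
  show ?case
  proof (cases "\<exists>i. 1 \<le> i \<and> i < n \<and> inv w (Suc i) < inv w i")
    case True
    then obtain i where i: "1 \<le> i" "i < n" "inv w (Suc i) < inv w i" by auto
    have st: "Ninv n (sw i \<circ> w) + 1 = Ninv n w" using Ninv_step(1)[OF less.prems i(1,2) i(3)] .
    have pw: "sw i \<circ> w permutes {1..n}"
      using i by (intro permutes_compose[OF less.prems] permutes_swap_id) auto
    obtain ws where ws: "set ws \<subseteq> {1..<n}" "perm_of_word ws = sw i \<circ> w" "length ws = Ninv n (sw i \<circ> w)"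
      using less.hyps[OF _ pw] st by auto
    have "perm_of_word (i # ws) = w" using ws(2) by (simp add: comp_assoc[symmetric])
    then show ?thesis using ws i st by (intro exI[of _ "i # ws"]) auto
  next
    case False
    then have "w = id" using no_descent_id[OF less.prems] by auto
    then show ?thesis by (intro exI[of _ "[]"]) simp
  qed
qed

lemma reduced_word_iff:
  assumes "w permutes {1..n}"
  shows "reduced_word n w ws \<longleftrightarrow> set ws \<subseteq> {1..<n} \<and> perm_of_word ws = w \<and> length ws = Ninv n w"
proof
  assume r: "reduced_word n w ws"
  obtain vs where vs: "set vs \<subseteq> {1..<n}" "perm_of_word vs = w" "length vs = Ninv n w"
    using exists_word[OF assms] by auto
  have "length ws \<le> length vs" using r vs unfolding reduced_word_def by auto
  moreover have "Ninv n w \<le> length ws" using r Ninv_word_le[of ws n] unfolding reduced_word_def by auto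
  ultimately show "set ws \<subseteq> {1..<n} \<and> perm_of_word ws = w \<and> length ws = Ninv n w"
    using r vs unfolding reduced_word_def by auto
next
  assume "set ws \<subseteq> {1..<n} \<and> perm_of_word ws = w \<and> length ws = Ninv n w"
  then show "reduced_word n w ws" unfolding reduced_word_def using Ninv_word_le by fastforce
qed

lemma exists_reduced: "w permutes {1..n} \<Longrightarrow> \<exists>ws. reduced_word n w ws"
  using exists_word reduced_word_iff by blast

definition red :: "nat \<Rightarrow> nat list \<Rightarrow> bool" where
  "red n ws \<longleftrightarrow> set ws \<subseteq> {1..<n} \<and> length ws = Ninv n (perm_of_word ws)"

lemma lprod_Nil[simp]: "lprod [] = 1" by (simp add: lprod_def)
lemma lprod_Cons[simp]: "lprod (x # xs) = x * lprod xs" by (simp add: lprod_def)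
lemma lprod_append[simp]: "lprod (xs @ ys) = lprod xs * lprod ys"
  by (induction xs) (auto simp: mult.assoc)

lemma sw_permutes: "1 \<le> i \<Longrightarrow> i < n \<Longrightarrow> sw i permutes {1..n}"
  by (intro permutes_swap_id) auto

lemma sw_comp_permutes: "w permutes {1..n} \<Longrightarrow> 1 \<le> i \<Longrightarrow> i < n \<Longrightarrow> sw i \<circ> w permutes {1..n}"
  by (intro permutes_compose sw_permutes)

lemma inv_sw_comp: "w permutes S \<Longrightarrow> inv (sw k \<circ> w) x = inv w (sw k x)"
proof -
  assume w: "w permutes S"
  have "bij w" using permutes_bij[OF w] .
  moreover have "bij (sw k)" by simp
  ultimately have "inv (sw k \<circ> w) = inv w \<circ> inv (sw k)" by (simp add: o_inv_distrib)
  then show ?thesis by simp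
qed

lemma sw_comp_sw: "sw i \<circ> (sw i \<circ> w) = w"
  by (simp add: comp_assoc[symmetric])

lemma red_tail:
  assumes r: "red n (i # u)"
  shows "red n u" "perm_of_word u = sw i \<circ> perm_of_word (i # u)"
    "inv (perm_of_word (i # u)) (Suc i) < inv (perm_of_word (i # u)) i"
    "1 \<le> i" "i < n"
proof -
  have s: "set u \<subseteq> {1..<n}" and i: "1 \<le> i" "i < n" using r by (auto simp: red_def)
  then show "1 \<le> i" "i < n" by auto
  define v where "v = perm_of_word u"
  have v: "v permutes {1..n}" using perm_of_word_permutes[OF s] v_def by simp
  have w: "perm_of_word (i # u) = sw i \<circ> v" by (simp add: v_def)
  have le: "Ninv n v \<le> length u" using Ninv_word_le[OF s] v_def by simp
  have len: "Suc (length u) = Ninv n (sw i \<circ> v)" using r w by (simp add: red_def)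
  have nd: "\<not> inv v (Suc i) < inv v i"
  proof
    assume "inv v (Suc i) < inv v i"
    from Ninv_step(1)[OF v i this] le len show False by simp
  qed
  have st: "Ninv n (sw i \<circ> v) = Ninv n v + 1" using Ninv_step(2)[OF v i nd] .
  show "red n u" using s le len st v_def by (simp add: red_def)
  show "perm_of_word u = sw i \<circ> perm_of_word (i # u)" unfolding w v_def by (simp only: sw_comp_sw)
  have injv: "inv v (Suc i) \<noteq> inv v i"
    using permutes_inj[OF permutes_inv[OF v]] by (auto dest: injD)
  show "inv (perm_of_word (i # u)) (Suc i) < inv (perm_of_word (i # u)) i"
    unfolding w inv_sw_comp[OF v] using nd injv by simp
qed

lemma red_step_down:
  assumes w: "w permutes {1..n}" and i: "1 \<le> i" "i < n" and d: "inv w (Suc i) < inv w i"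
  shows "sw i \<circ> w permutes {1..n}" "Ninv n (sw i \<circ> w) + 1 = Ninv n w"
  using sw_comp_permutes[OF w i] Ninv_step(1)[OF w i d] by auto

lemma red_Cons:
  assumes "red n z" "1 \<le> i" "i < n" "perm_of_word z = sw i \<circ> w" "w permutes {1..n}"
    "inv w (Suc i) < inv w i"
  shows "red n (i # z)" "perm_of_word (i # z) = w"
proof -
  have "Ninv n (sw i \<circ> w) + 1 = Ninv n w" using red_step_down assms(2,3,5,6) by blast
  moreover have "perm_of_word (i # z) = w" using assms(4) sw_comp_sw by simp
  ultimately show "red n (i # z)" "perm_of_word (i # z) = w" using assms(1-4) by (auto simp: red_def)
qed

lemma exists_red: "w permutes {1..n} \<Longrightarrow> \<exists>z. red n z \<and> perm_of_word z = w"
  using exists_word unfolding red_def by metis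

lemma matsumoto:
  fixes T :: "nat \<Rightarrow> 'a::monoid_mult"
  assumes braid: "\<forall>i. 1 \<le> i \<and> i \<le> n - 2 \<longrightarrow> T (i+1) * T i * T (i+1) = T i * T (i+1) * T i"
    and comm: "\<forall>i j. i + 1 < j \<and> j \<le> n - 1 \<longrightarrow> T i * T j = T j * T i"
  shows "red n ws \<Longrightarrow> red n vs \<Longrightarrow> perm_of_word vs = perm_of_word ws \<Longrightarrow>
    lprod (map T ws) = lprod (map T vs)"
proof (induction "length ws" arbitrary: ws vs rule: less_induct)
  case less
  note IH = less.hyps
  have lenv: "length vs = length ws" using less.prems by (simp add: red_def)
  show ?case
  proof (cases ws)
    case Nil then show ?thesis using lenv by simp
  next
    case (Cons i u)
    then obtain j v where vs: "vs = j # v" using lenv by (cases vs) auto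
    define w where "w = perm_of_word ws"
    have wp: "w permutes {1..n}" using less.prems(1) perm_of_word_permutes w_def by (simp add: red_def)
    have ru: "red n u" and pu: "perm_of_word u = sw i \<circ> w" and di: "inv w (Suc i) < inv w i"
      and i: "1 \<le> i" "i < n"
      using red_tail[of n i u] less.prems(1) Cons w_def by auto
    have rv: "red n v" and pv: "perm_of_word v = sw j \<circ> w" and dj: "inv w (Suc j) < inv w j"
      and j: "1 \<le> j" "j < n"
      using red_tail[of n j v] less.prems(2,3) vs w_def by auto
    have lu: "length u < length ws" "length v < length ws" using Cons lenv vs by auto
    have ccase: "lprod (map T (i' # u')) = lprod (map T (j' # v'))"
      if c: "i' + 1 < j'" "j' < n" "1 \<le> i'" and ru': "red n u'" "red n v'"
        and pu': "perm_of_word u' = sw i' \<circ> w" and pv': "perm_of_word v' = sw j' \<circ> w"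
        and di': "inv w (Suc i') < inv w i'" and dj': "inv w (Suc j') < inv w j'"
        and lu': "length u' < length ws" "length v' < length ws"
        for i' j' u' v'
    proof -
      have y1: "sw i' \<circ> w permutes {1..n}" using sw_comp_permutes[OF wp] c by auto
      have d1: "inv (sw i' \<circ> w) (Suc j') < inv (sw i' \<circ> w) j'"
        unfolding inv_sw_comp[OF wp] using c dj' by (simp add: transpose_def)
      have y2: "sw j' \<circ> w permutes {1..n}" using sw_comp_permutes[OF wp] c by auto
      have d2: "inv (sw j' \<circ> w) (Suc i') < inv (sw j' \<circ> w) i'"
        unfolding inv_sw_comp[OF wp] using c di' by (simp add: transpose_def)
      have sc: "sw j' \<circ> (sw i' \<circ> w) = sw i' \<circ> (sw j' \<circ> w)"
        using c by (auto simp: fun_eq_iff transpose_def)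
      have xp: "sw j' \<circ> (sw i' \<circ> w) permutes {1..n}" using sw_comp_permutes[OF y1] c by auto
      obtain z where z: "red n z" "perm_of_word z = sw j' \<circ> (sw i' \<circ> w)"
        using exists_red[OF xp] by auto
      have r1: "red n (j' # z)" "perm_of_word (j' # z) = sw i' \<circ> w"
        using red_Cons[OF z(1) _ _ z(2) y1 d1] c by auto
      have r2: "red n (i' # z)" "perm_of_word (i' # z) = sw j' \<circ> w"
        using red_Cons[OF z(1) _ _ _ y2 d2] z(2) sc c by auto
      have e1: "lprod (map T u') = lprod (map T (j' # z))"
        using IH[OF lu'(1) ru'(1) r1(1)] r1(2) pu' by simp
      have e2: "lprod (map T v') = lprod (map T (i' # z))"
        using IH[OF lu'(2) ru'(2) r2(1)] r2(2) pv' by simp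
      have "i' + 1 < j' \<and> j' \<le> n - 1" using c by auto
      then have "T i' * T j' = T j' * T i'" using comm by blast
      then show ?thesis using e1 e2 by (simp add: mult.assoc[symmetric])
    qed
    have bcase: "lprod (map T (i' # u')) = lprod (map T (Suc i' # v'))"
      if c: "Suc i' < n" "1 \<le> i'" and ru': "red n u'" "red n v'"
        and pu': "perm_of_word u' = sw i' \<circ> w" and pv': "perm_of_word v' = sw (Suc i') \<circ> w"
        and di': "inv w (Suc i') < inv w i'" and dj': "inv w (Suc (Suc i')) < inv w (Suc i')"
        and lu': "length u' < length ws" "length v' < length ws"
        for i' u' v'
    proof -
      define y1 where "y1 = sw i' \<circ> w"
      define y2 where "y2 = sw (Suc i') \<circ> y1"
      define x where "x = sw i' \<circ> y2"
      define y1' where "y1' = sw (Suc i') \<circ> w"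
      define y2' where "y2' = sw i' \<circ> y1'"
      have py1: "y1 permutes {1..n}" unfolding y1_def using sw_comp_permutes[OF wp] c by auto
      have py2: "y2 permutes {1..n}" unfolding y2_def using sw_comp_permutes[OF py1] c by auto
      have px: "x permutes {1..n}" unfolding x_def using sw_comp_permutes[OF py2] c by auto
      have py1': "y1' permutes {1..n}" unfolding y1'_def using sw_comp_permutes[OF wp] c by auto
      have py2': "y2' permutes {1..n}" unfolding y2'_def using sw_comp_permutes[OF py1'] c by auto
      have d1: "inv y1 (Suc (Suc i')) < inv y1 (Suc i')"
        unfolding y1_def inv_sw_comp[OF wp] using di' dj' by (simp add: transpose_def)
      have d2: "inv y2 (Suc i') < inv y2 i'"
        unfolding y2_def inv_sw_comp[OF py1] unfolding y1_def inv_sw_comp[OF wp]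
        using di' dj' by (simp add: transpose_def)
      have d1': "inv y1' (Suc i') < inv y1' i'"
        unfolding y1'_def inv_sw_comp[OF wp] using di' dj' by (simp add: transpose_def)
      have d2': "inv y2' (Suc (Suc i')) < inv y2' (Suc i')"
        unfolding y2'_def inv_sw_comp[OF py1'] unfolding y1'_def inv_sw_comp[OF wp]
        using di' dj' by (simp add: transpose_def)
      have xeq: "sw (Suc i') \<circ> y2' = x"
        unfolding x_def y2_def y1_def y2'_def y1'_def by (auto simp: fun_eq_iff transpose_def)
      obtain z where z: "red n z" "perm_of_word z = x" using exists_red[OF px] by auto
      have r1: "red n (i' # z)" "perm_of_word (i' # z) = y2"
        using red_Cons[OF z(1) _ _ _ py2 d2] z(2) c x_def by auto
      have r2: "red n (Suc i' # i' # z)" "perm_of_word (Suc i' # i' # z) = y1"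
        using red_Cons[OF r1(1) _ _ _ py1 d1] r1(2) c y2_def by auto
      have r1': "red n (Suc i' # z)" "perm_of_word (Suc i' # z) = y2'"
        using red_Cons[OF z(1) _ _ _ py2' d2'] z(2) c xeq by auto
      have r2': "red n (i' # Suc i' # z)" "perm_of_word (i' # Suc i' # z) = y1'"
        using red_Cons[OF r1'(1) _ _ _ py1' d1'] r1'(2) c y2'_def by auto
      have e1: "lprod (map T u') = lprod (map T (Suc i' # i' # z))"
        using IH[OF lu'(1) ru'(1) r2(1)] r2(2) pu' y1_def by simp
      have e2: "lprod (map T v') = lprod (map T (i' # Suc i' # z))"
        using IH[OF lu'(2) ru'(2) r2'(1)] r2'(2) pv' y1'_def by simp
      have "T (i'+1) * T i' * T (i'+1) = T i' * T (i'+1) * T i'" using braid c by auto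
      then show ?thesis using e1 e2 by (simp add: mult.assoc[symmetric])
    qed
    show ?thesis
    proof -
      consider "i = j" | "i + 1 < j" | "j + 1 < i" | "j = Suc i" | "i = Suc j" by linarith
      then show ?thesis
      proof cases
        case 1
        then have "lprod (map T u) = lprod (map T v)" using IH[OF lu(1) ru rv] pu pv by simp
        then show ?thesis using Cons vs 1 by simp
      next
        case 2 then show ?thesis using ccase[OF 2 j(2) i(1) ru rv pu pv di dj lu] Cons vs by simp
      next
        case 3 then show ?thesis using ccase[OF 3 i(2) j(1) rv ru pv pu dj di lu(2,1)] Cons vs by simp
      next
        case 4 then show ?thesis using bcase[OF _ i(1) ru rv pu _ di] pv dj j lu Cons vs by simp
      next
        case 5 then show ?thesis using bcase[OF _ j(1) rv ru pv _ dj] pu di i lu Cons vs by simp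
      qed
    qed
  qed
qed



inductive_set rsp :: "('r::comm_ring_1 \<Rightarrow> 'a::ring_1) \<Rightarrow> 'a set \<Rightarrow> 'a set" for emb S where
  rsp_zero: "0 \<in> rsp emb S"
| rsp_gen: "y \<in> S \<Longrightarrow> emb c * y \<in> rsp emb S"
| rsp_add: "x \<in> rsp emb S \<Longrightarrow> y \<in> rsp emb S \<Longrightarrow> x + y \<in> rsp emb S"

definition cm :: "'a::monoid_mult \<Rightarrow> 'a \<Rightarrow> bool" where "cm z y \<longleftrightarrow> z * y = y * z"

lemma cm_mult: "cm z x \<Longrightarrow> cm z y \<Longrightarrow> cm z (x * y)"
  unfolding cm_def by (metis mult.assoc)
lemma cm_one[simp]: "cm z 1" by (simp add: cm_def)
lemma cm_refl: "cm z z" by (simp add: cm_def)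
lemma cm_sym: "cm z y \<Longrightarrow> cm y z" by (simp add: cm_def)
lemma cm_add: "cm z x \<Longrightarrow> cm z y \<Longrightarrow> cm z (x + (y::'a::ring_1))"
  by (simp add: cm_def algebra_simps)
lemma cm_diff: "cm z x \<Longrightarrow> cm z y \<Longrightarrow> cm z (x - (y::'a::ring_1))"
  by (simp add: cm_def algebra_simps)
lemma cm_uminus: "cm z x \<Longrightarrow> cm z (- (x::'a::ring_1))"
  by (simp add: cm_def algebra_simps)
lemma cm_zero: "cm z (0::'a::ring_1)" by (simp add: cm_def)
lemma cm_lprod: "(\<And>y. y \<in> set ys \<Longrightarrow> cm z y) \<Longrightarrow> cm z (lprod ys)"
  by (induction ys) (auto intro: cm_mult)
lemma cm_power: "cm z y \<Longrightarrow> cm z (y ^ k)"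
  by (induction k) (auto intro: cm_mult)

lemma lprod_ones: "(\<And>x. x \<in> set xs \<Longrightarrow> f x = 1) \<Longrightarrow> lprod (map f xs) = 1"
  by (induction xs) auto

locale AKc =
  fixes emb :: "'r::comm_ring_1 \<Rightarrow> 'a::ring_1" and n r :: nat and q qinv :: 'r
    and Qs :: "nat \<Rightarrow> 'r" and T :: "nat \<Rightarrow> 'a"
  assumes rels: "AK_rels emb n r q qinv Qs T"
begin

abbreviation E where "E \<equiv> emb"
abbreviation L where "L \<equiv> AK_L emb qinv T"

lemma cemb: "central_emb emb" using rels unfolding AK_rels_def by blast
lemma E1[simp]: "E 1 = 1" using cemb unfolding central_emb_def by blast
lemma Eadd[simp]: "E (x + y) = E x + E y" using cemb unfolding central_emb_def by blast
lemma Emult[simp]: "E (x * y) = E x * E y" using cemb unfolding central_emb_def by blast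
lemma cen: "E x * z = z * E x" using cemb unfolding central_emb_def by blast
lemma E0[simp]: "E 0 = 0"
proof -
  have "E 0 = E 0 + E 0" by (metis Eadd add_0)
  then show ?thesis by simp
qed
lemma Euminus[simp]: "E (- x) = - E x"
proof -
  have "E (- x) + E x = 0" by (metis Eadd E0 add.left_inverse)
  then show ?thesis by (simp add: eq_neg_iff_add_eq_0)
qed
lemma Ediff[simp]: "E (x - y) = E x - E y"
  by (metis Eadd Euminus diff_conv_add_uminus)
lemma Epow: "E (x ^ k) = E x ^ k" by (induction k) auto
lemma cm_E: "cm z (E c)" by (simp add: cm_def cen)
lemma Eassoc: "E c * (x * y) = (E c * x) * y" by (simp add: mult.assoc)

lemma qq: "E q * E qinv = 1"
proof -
  have "q * qinv = 1" using rels unfolding AK_rels_def by blast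
  then show ?thesis by (metis Emult E1)
qed
lemma qq': "E qinv * E q = 1" using qq cen by metis
lemma quad: "1 \<le> i \<Longrightarrow> i \<le> n - 1 \<Longrightarrow> (T i + E q) * (T i - 1) = 0"
  using rels unfolding AK_rels_def by blast
lemma braid: "\<forall>i. 1 \<le> i \<and> i \<le> n - 2 \<longrightarrow> T (i+1) * T i * T (i+1) = T i * T (i+1) * T i"
  using rels unfolding AK_rels_def by blast
lemma comm: "\<forall>i j. i + 1 < j \<and> j \<le> n - 1 \<longrightarrow> T i * T j = T j * T i"
  using rels unfolding AK_rels_def by blast
lemma T01: "T 0 * T 1 * T 0 * T 1 = T 1 * T 0 * T 1 * T 0"
  using rels unfolding AK_rels_def by blast
lemma cmT: "i + 1 < j \<Longrightarrow> j < n \<Longrightarrow> cm (T i) (T j)"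
proof -
  assume "i + 1 < j" "j < n"
  then have "i + 1 < j \<and> j \<le> n - 1" by auto
  then show ?thesis using comm unfolding cm_def by blast
qed

lemma Tinv: "1 \<le> i \<Longrightarrow> i < n \<Longrightarrow> T i * (T i + E q - 1) = E q"
proof -
  assume "1 \<le> i" "i < n"
  then have z: "(T i + E q) * (T i - 1) = 0" using quad by simp
  have c: "E q * T i = T i * E q" by (rule cen)
  have "(T i + E q) * (T i - 1) = T i * (T i + E q - 1) - E q"
    by (simp add: ring_distribs c)
  then show ?thesis using z by simp
qed

lemma Tinv': "1 \<le> i \<Longrightarrow> i < n \<Longrightarrow> (T i + E q - 1) * T i = E q"
proof -
  assume a: "1 \<le> i" "i < n"
  have c: "E q * T i = T i * E q" by (rule cen)
  have "(T i + E q - 1) * T i = T i * (T i + E q - 1)" by (simp add: ring_distribs c)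
  then show ?thesis using Tinv[OF a] by simp
qed

lemma Tsq: "1 \<le> i \<Longrightarrow> i < n \<Longrightarrow> T i * T i = E (1 - q) * T i + E q"
proof -
  assume a: "1 \<le> i" "i < n"
  have c: "E q * T i = T i * E q" by (rule cen)
  have "T i * (T i + E q - 1) = T i * T i - E (1 - q) * T i"
    by (simp add: ring_distribs c)
  then show ?thesis using Tinv[OF a] by (simp add: algebra_simps)
qed

lemma L_def': "L m = E (qinv ^ (m - 1)) * lprod (map T (rev [1..<m] @ [0] @ [1..<m]))"
  by (simp add: AK_L_def)

lemma L1: "L 1 = T 0" by (simp add: AK_L_def)
lemma L1': "L (Suc 0) = T 0" by (simp add: AK_L_def)

lemma L_Suc: assumes "1 \<le> m" shows "L (Suc m) = E qinv * (T m * L m * T m)"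
proof -
  have u: "[1..<Suc m] = [1..<m] @ [m]" using assms by simp
  define W where "W = lprod (map T (rev [1..<m] @ [0] @ [1..<m]))"
  have "lprod (map T (rev [1..<Suc m] @ [0] @ [1..<Suc m])) = T m * W * T m"
    unfolding u W_def by (simp add: mult.assoc)
  moreover have "qinv ^ (Suc m - 1) = qinv * qinv ^ (m - 1)" using assms
    by (cases m) auto
  ultimately have "L (Suc m) = E qinv * E (qinv ^ (m-1)) * (T m * W * T m)"
    by (simp add: AK_L_def W_def)
  also have "\<dots> = E qinv * (T m * (E (qinv ^ (m-1)) * W) * T m)"
  proof -
    have c: "E (qinv ^ (m-1)) * T m = T m * E (qinv ^ (m-1))" by (rule cen)
    have "E (qinv ^ (m-1)) * (T m * W * T m) = (E (qinv ^ (m-1)) * T m) * W * T m"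
      by (simp add: mult.assoc)
    also have "\<dots> = T m * (E (qinv ^ (m-1)) * W) * T m" unfolding c by (simp add: mult.assoc)
    finally have "E (qinv ^ (m-1)) * (T m * W * T m) = T m * (E (qinv ^ (m-1)) * W) * T m" .
    then show ?thesis by (simp add: mult.assoc)
  qed
  finally show ?thesis by (simp add: AK_L_def W_def)
qed


subsection \<open>Spans\<close>

lemma rsp_gen1: "y \<in> S \<Longrightarrow> y \<in> rsp emb S"
  using rsp_gen[of y S emb 1] by simp

lemma rsp_smult: "x \<in> rsp emb S \<Longrightarrow> E c * x \<in> rsp emb S"
proof (induction rule: rsp.induct)
  case rsp_zero then show ?case by (simp add: rsp.rsp_zero)
next
  case (rsp_gen y c')
  show ?case using rsp.rsp_gen[OF rsp_gen, of E "c * c'"] by (simp add: mult.assoc)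
next
  case (rsp_add x y)
  then show ?case by (simp add: distrib_left rsp.rsp_add)
qed

lemma rsp_uminus: "x \<in> rsp emb S \<Longrightarrow> - x \<in> rsp emb S"
  using rsp_smult[of x S "-1"] by simp

lemma rsp_diff: "x \<in> rsp emb S \<Longrightarrow> y \<in> rsp emb S \<Longrightarrow> x - y \<in> rsp emb S"
proof -
  assume a: "x \<in> rsp emb S" "y \<in> rsp emb S"
  have "x + (- y) \<in> rsp emb S" by (rule rsp.rsp_add[OF a(1) rsp_uminus[OF a(2)]])
  then show ?thesis by (simp only: diff_conv_add_uminus)
qed

lemma rsp_sub: assumes "(\<And>y. y \<in> S \<Longrightarrow> y \<in> rsp emb S')" "x \<in> rsp emb S" shows "x \<in> rsp emb S'"
  using assms(2)
proof (induction rule: rsp.induct)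
  case rsp_zero then show ?case by (simp add: rsp.rsp_zero)
next
  case (rsp_gen y c) then show ?case using assms(1) by (simp add: rsp_smult)
next
  case (rsp_add x y) then show ?case by (simp add: rsp.rsp_add)
qed

lemma rsp_mono: "S \<subseteq> S' \<Longrightarrow> x \<in> rsp emb S \<Longrightarrow> x \<in> rsp emb S'"
  by (rule rsp_sub) (auto intro: rsp_gen1)

lemma rsp_lmult: assumes "(\<And>y. y \<in> S \<Longrightarrow> z * y \<in> rsp emb S')" "x \<in> rsp emb S" shows "z * x \<in> rsp emb S'"
  using assms(2)
proof (induction rule: rsp.induct)
  case rsp_zero then show ?case by (simp add: rsp.rsp_zero)
next
  case (rsp_gen y c)
  have "z * (E c * y) = E c * (z * y)" by (metis cen mult.assoc)
  then show ?case using rsp_smult assms(1) rsp_gen by simp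
next
  case (rsp_add x y) then show ?case by (simp add: distrib_left rsp.rsp_add)
qed

lemma rsp_rmult: assumes "(\<And>y. y \<in> S \<Longrightarrow> y * z \<in> rsp emb S')" "x \<in> rsp emb S" shows "x * z \<in> rsp emb S'"
  using assms(2)
proof (induction rule: rsp.induct)
  case rsp_zero then show ?case by (simp add: rsp.rsp_zero)
next
  case (rsp_gen y c)
  have "(E c * y) * z = E c * (y * z)" by (simp add: mult.assoc)
  then show ?case using rsp_smult assms(1) rsp_gen by simp
next
  case (rsp_add x y) then show ?case by (simp add: distrib_right rsp.rsp_add)
qed

lemma rsp_mult: "(\<And>x y. x \<in> S \<Longrightarrow> y \<in> S' \<Longrightarrow> x * y \<in> rsp emb S'') \<Longrightarrow>
    x \<in> rsp emb S \<Longrightarrow> y \<in> rsp emb S' \<Longrightarrow> x * y \<in> rsp emb S''"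
  by (rule rsp_rmult[where S=S]) (auto intro: rsp_lmult)

lemma rsp_cm: assumes "\<And>y. y \<in> S \<Longrightarrow> cm z y" "x \<in> rsp emb S" shows "cm z x"
  using assms(2)
proof (induction rule: rsp.induct)
  case rsp_zero then show ?case by (simp add: cm_zero)
next
  case (rsp_gen y c) then show ?case using assms(1) by (simp add: cm_mult cm_E)
next
  case (rsp_add x y) then show ?case by (simp add: cm_add)
qed

lemma rsp_sum: "finite I \<Longrightarrow> (\<And>i. i \<in> I \<Longrightarrow> f i \<in> rsp emb S) \<Longrightarrow> sum f I \<in> rsp emb S"
  by (induction I rule: finite_induct) (auto intro: rsp.rsp_zero rsp.rsp_add)

lemma rsp_rspan: "x \<in> rsp emb S \<Longrightarrow> x \<in> rspan emb S"
proof (induction rule: rsp.induct)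
  case rsp_zero
  show ?case unfolding rspan_def by (rule CollectI, rule exI[of _ "{}"]) simp
next
  case (rsp_gen y c)
  show ?case unfolding rspan_def
    by (rule CollectI, rule exI[of _ "{y}"], rule exI[of _ "\<lambda>_. c"]) (simp add: rsp_gen)
next
  case (rsp_add x y)
  obtain F1 g1 where 1: "finite F1" "F1 \<subseteq> S" "x = (\<Sum>y\<in>F1. E (g1 y) * y)"
    using rsp_add(3) unfolding rspan_def by blast
  obtain F2 g2 where 2: "finite F2" "F2 \<subseteq> S" "y = (\<Sum>y\<in>F2. E (g2 y) * y)"
    using rsp_add(4) unfolding rspan_def by blast
  define g where "g = (\<lambda>y. (if y \<in> F1 then g1 y else 0) + (if y \<in> F2 then g2 y else 0))"
  have a: "(\<Sum>y\<in>F1 \<union> F2. E (if y \<in> F1 then g1 y else 0) * y) = (\<Sum>y\<in>F1. E (g1 y) * y)"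
    by (rule sum.mono_neutral_cong_right) (use 1 2 in auto)
  have b: "(\<Sum>y\<in>F1 \<union> F2. E (if y \<in> F2 then g2 y else 0) * y) = (\<Sum>y\<in>F2. E (g2 y) * y)"
    by (rule sum.mono_neutral_cong_right) (use 1 2 in auto)
  have "(\<Sum>z\<in>F1 \<union> F2. E (g z) * z) = (\<Sum>z\<in>F1 \<union> F2. E (if z \<in> F1 then g1 z else 0) * z + E (if z \<in> F2 then g2 z else 0) * z)"
    unfolding g_def by (simp only: Eadd distrib_right)
  also have "\<dots> = x + y" by (simp only: sum.distrib a b 1(3) 2(3))
  finally have eq: "(\<Sum>z\<in>F1 \<union> F2. E (g z) * z) = x + y" .
  show ?case unfolding rspan_def
  proof (rule CollectI, intro exI conjI)
    show "finite (F1 \<union> F2)" using 1 2 by simp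
    show "F1 \<union> F2 \<subseteq> S" using 1 2 by simp
    show "x + y = (\<Sum>z\<in>F1 \<union> F2. E (g z) * z)" using eq by simp
  qed
qed

subsection \<open>Commutation of Jucys-Murphy elements\<close>

lemma cm_Ewords: "(\<And>x. x \<in> set ws \<Longrightarrow> cm z (T x)) \<Longrightarrow> cm z (E c * lprod (map T ws))"
  by (rule cm_mult[OF cm_E cm_lprod]) auto

lemma T0_L: "1 \<le> m \<Longrightarrow> m \<le> n \<Longrightarrow> cm (T 0) (L m)"
proof (induction m rule: nat_induct_at_least)
  case base then show ?case by (simp add: L1' cm_refl)
next
  case (Suc m)
  show ?case
  proof (cases "m = 1")
    case True
    have "T 0 * (T 1 * T 0 * T 1) = T 1 * T 0 * T 1 * T 0" using T01 by (simp add: mult.assoc)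
    then have "cm (T 0) (T 1 * L 1 * T 1)" by (simp add: cm_def L1' mult.assoc)
    then show ?thesis using True L_Suc[of 1] by (simp add: cm_mult cm_E)
  next
    case False
    then have "cm (T 0) (T m)" using Suc by (intro cmT) auto
    then show ?thesis using L_Suc[of m] Suc by (simp add: cm_mult cm_E)
  qed
qed

lemma Ti_L_low: "1 \<le> m \<Longrightarrow> m < i \<Longrightarrow> i < n \<Longrightarrow> cm (T i) (L m)"
  unfolding L_def'
proof (rule cm_Ewords)
  fix x assume h: "1 \<le> m" "m < i" "i < n" "x \<in> set (rev [1..<m] @ [0] @ [1..<m])"
  then have "x + 1 < i" by auto
  then have "cm (T x) (T i)" using h(3) by (rule cmT)
  then show "cm (T i) (T x)" using cm_sym by blast
qed

lemma Ti_L_high2: "1 \<le> i \<Longrightarrow> i + 2 \<le> n \<Longrightarrow> cm (T i) (L (i + 2))"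
proof -
  assume a: "1 \<le> i" "i + 2 \<le> n"
  have b: "T (i+1) * T i * T (i+1) = T i * T (i+1) * T i" using braid a by auto
  have lo: "T (i+1) * L i = L i * T (i+1)" using Ti_L_low[of i "i+1"] a by (simp add: cm_def)
  have "T i * (T (i+1) * T i * L i * T i * T (i+1)) = (T i * T (i+1) * T i) * (L i * T i * T (i+1))"
    by (simp only: mult.assoc)
  also have "\<dots> = (T (i+1) * T i * T (i+1)) * (L i * T i * T (i+1))" by (simp only: b)
  also have "\<dots> = T (i+1) * T i * (T (i+1) * L i) * (T i * T (i+1))" by (simp only: mult.assoc)
  also have "\<dots> = T (i+1) * T i * (L i * T (i+1)) * (T i * T (i+1))" by (simp only: lo)
  also have "\<dots> = (T (i+1) * T i * L i) * (T (i+1) * T i * T (i+1))" by (simp only: mult.assoc)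
  also have "\<dots> = (T (i+1) * T i * L i) * (T i * T (i+1) * T i)" by (simp only: b)
  also have "\<dots> = (T (i+1) * T i * L i * T i * T (i+1)) * T i" by (simp only: mult.assoc)
  finally have c: "cm (T i) (T (i+1) * T i * L i * T i * T (i+1))" by (simp add: cm_def)
  have "L (i + 2) = E qinv * (T (i+1) * (E qinv * (T i * L i * T i)) * T (i+1))"
    using L_Suc[of "i+1"] L_Suc[of i] a by simp
  also have "\<dots> = E qinv * (E qinv * (T (i+1) * T i * L i * T i * T (i+1)))"
  proof -
    have e: "T (i+1) * E qinv = E qinv * T (i+1)" by (rule cen[symmetric])
    have "T (i+1) * (E qinv * (T i * L i * T i)) * T (i+1) = (T (i+1) * E qinv) * (T i * L i * T i) * T (i+1)"
      by (simp add: mult.assoc)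
    also have "\<dots> = E qinv * (T (i+1) * T i * L i * T i * T (i+1))" unfolding e by (simp add: mult.assoc)
    finally show ?thesis by simp
  qed
  finally have eq: "L (i + 2) = E qinv * (E qinv * (T (i+1) * T i * L i * T i * T (i+1)))" .
  show ?thesis unfolding eq by (rule cm_mult[OF cm_E cm_mult[OF cm_E c]])
qed

lemma Ti_L_high: "1 \<le> i \<Longrightarrow> i + 1 < m \<Longrightarrow> m \<le> n \<Longrightarrow> cm (T i) (L m)"
proof -
  assume a: "1 \<le> i" "i + 1 < m" "m \<le> n"
  have "\<forall>k. i + 2 + k \<le> n \<longrightarrow> cm (T i) (L (i + 2 + k))"
  proof
    fix k show "i + 2 + k \<le> n \<longrightarrow> cm (T i) (L (i + 2 + k))"
    proof (induction k)
      case 0 then show ?case using Ti_L_high2 a by simp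
    next
      case (Suc k)
      show ?case
      proof
        assume b: "i + 2 + Suc k \<le> n"
        have "cm (T i) (T (i + 2 + k))" using a b by (intro cmT) auto
        moreover have "cm (T i) (L (i + 2 + k))" using Suc b by simp
        moreover have "L (i + 2 + Suc k) = E qinv * (T (i + 2 + k) * L (i + 2 + k) * T (i + 2 + k))"
          using L_Suc[of "i + 2 + k"] by simp
        ultimately show "cm (T i) (L (i + 2 + Suc k))" by (simp add: cm_mult cm_E)
      qed
    qed
  qed
  then have h: "i + 2 + (m - (i + 2)) \<le> n \<longrightarrow> cm (T i) (L (i + 2 + (m - (i + 2))))" by blast
  have m: "i + 2 + (m - (i + 2)) = m" using a by simp
  show ?thesis using h a(3) unfolding m by blast
qed

lemma L_comm: "1 \<le> i \<Longrightarrow> i < j \<Longrightarrow> j \<le> n \<Longrightarrow> cm (L j) (L i)"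
  unfolding L_def'[of i]
proof (rule cm_Ewords)
  fix x assume a: "1 \<le> i" "i < j" "j \<le> n" "x \<in> set (rev [1..<i] @ [0] @ [1..<i])"
  show "cm (L j) (T x)"
  proof (cases "x = 0")
    case True
    have "cm (T 0) (L j)" using a by (intro T0_L) auto
    then show ?thesis using True cm_sym by blast
  next
    case False
    have "cm (T x) (L j)" using a False by (intro Ti_L_high) auto
    then show ?thesis using cm_sym by blast
  qed
qed

lemma L_comm': "1 \<le> i \<Longrightarrow> i \<le> n \<Longrightarrow> 1 \<le> j \<Longrightarrow> j \<le> n \<Longrightarrow> cm (L j) (L i)"
proof -
  assume a: "1 \<le> i" "i \<le> n" "1 \<le> j" "j \<le> n"
  consider "i < j" | "i = j" | "j < i" by linarith
  then show ?thesis
  proof cases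
    case 1 then show ?thesis using a L_comm by blast
  next
    case 2 then show ?thesis by (simp add: cm_refl)
  next
    case 3 then have "cm (L i) (L j)" using a L_comm by blast
    then show ?thesis using cm_sym by blast
  qed
qed

lemma TL: "1 \<le> i \<Longrightarrow> i < n \<Longrightarrow> T i * L i = L (Suc i) * (T i + E q - 1)"
proof -
  assume a: "1 \<le> i" "i < n"
  have "L (Suc i) * (T i + E q - 1) = E qinv * (T i * L i * (T i * (T i + E q - 1)))"
    using L_Suc[of i] a by (simp add: mult.assoc)
  also have "\<dots> = E qinv * (T i * L i * E q)" using Tinv[OF a] by simp
  also have "\<dots> = T i * L i" by (metis cen mult.assoc qq' mult_1 mult_1_right)
  finally show ?thesis by simp
qed


subsection \<open>Hecke subalgebras\<close>

definition Hk :: "nat \<Rightarrow> 'a set" where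
  "Hk m = rsp emb {lprod (map T ws) | ws. set ws \<subseteq> {1..<m}}"

lemma Hk_word: "set ws \<subseteq> {1..<m} \<Longrightarrow> lprod (map T ws) \<in> Hk m"
  unfolding Hk_def by (rule rsp_gen1) blast

lemma Hk_one: "1 \<in> Hk m"
  using Hk_word[of "[]" m] by simp

lemma Hk_T: "1 \<le> i \<Longrightarrow> i < m \<Longrightarrow> T i \<in> Hk m"
  using Hk_word[of "[i]" m] by simp

lemma Hk_zero: "0 \<in> Hk m" unfolding Hk_def by (rule rsp_zero)
lemma Hk_add: "x \<in> Hk m \<Longrightarrow> y \<in> Hk m \<Longrightarrow> x + y \<in> Hk m" unfolding Hk_def by (rule rsp_add)
lemma Hk_diff: "x \<in> Hk m \<Longrightarrow> y \<in> Hk m \<Longrightarrow> x - y \<in> Hk m" unfolding Hk_def by (rule rsp_diff)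
lemma Hk_smult: "x \<in> Hk m \<Longrightarrow> E c * x \<in> Hk m" unfolding Hk_def by (rule rsp_smult)
lemma Hk_E: "E c \<in> Hk m" using Hk_smult[OF Hk_one[of m], of c] by simp

lemma Hk_mult: "x \<in> Hk m \<Longrightarrow> y \<in> Hk m \<Longrightarrow> x * y \<in> Hk m"
  unfolding Hk_def
proof (rule rsp_mult)
  fix x y assume "x \<in> {lprod (map T ws) |ws. set ws \<subseteq> {1..<m}}" "y \<in> {lprod (map T ws) |ws. set ws \<subseteq> {1..<m}}"
  then obtain ws vs where "x = lprod (map T ws)" "y = lprod (map T vs)" "set ws \<subseteq> {1..<m}" "set vs \<subseteq> {1..<m}"
    by blast
  then have "x * y = lprod (map T (ws @ vs))" "set (ws @ vs) \<subseteq> {1..<m}" by auto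
  then show "x * y \<in> rsp emb {lprod (map T ws) |ws. set ws \<subseteq> {1..<m}}" by (intro rsp_gen1) blast
qed

lemma Hk_mono: "m \<le> m' \<Longrightarrow> x \<in> Hk m \<Longrightarrow> x \<in> Hk m'"
  unfolding Hk_def
proof (rule rsp_mono)
  assume "m \<le> m'"
  then show "{lprod (map T ws) |ws. set ws \<subseteq> {1..<m}} \<subseteq> {lprod (map T ws) |ws. set ws \<subseteq> {1..<m'}}"
    by fastforce
qed

lemma Hk_lprod: "(\<And>y. y \<in> set ys \<Longrightarrow> y \<in> Hk m) \<Longrightarrow> lprod ys \<in> Hk m"
  by (induction ys) (auto intro: Hk_one Hk_mult)

lemma Hk_cm: assumes "x \<in> Hk m" "\<And>i. 1 \<le> i \<Longrightarrow> i < m \<Longrightarrow> cm z (T i)" shows "cm z x"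
  using assms(1) unfolding Hk_def
proof (rule rsp_cm[rotated])
  fix y assume "y \<in> {lprod (map T ws) |ws. set ws \<subseteq> {1..<m}}"
  then obtain ws where "y = lprod (map T ws)" "set ws \<subseteq> {1..<m}" by blast
  then show "cm z y" using assms(2) by (auto intro!: cm_lprod simp: subset_iff)
qed

subsection \<open>Spanning by the T_w\<close>

lemma Tw_red:
  assumes w: "w permutes {1..n}" and r: "red n ws" and p: "perm_of_word ws = w"
  shows "Tw n T w = lprod (map T ws)"
proof -
  define vs where "vs = (SOME ws. reduced_word n w ws)"
  have "reduced_word n w vs" unfolding vs_def using exists_reduced[OF w] by (rule someI_ex)
  then have v: "set vs \<subseteq> {1..<n}" "perm_of_word vs = w" "length vs = Ninv n w"
    using reduced_word_iff[OF w] by auto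
  then have rv: "red n vs" by (simp add: red_def)
  have "lprod (map T vs) = lprod (map T ws)" using matsumoto[OF braid comm rv r] v p by simp
  then show ?thesis by (simp add: Tw_def vs_def)
qed

lemma Tgen:
  assumes k: "k \<le> n" and w: "w permutes {1..k}" and i: "1 \<le> i" "i < k"
  shows "T i * Tw n T w \<in> rsp emb {Tw n T v | v. v permutes {1..k}}"
proof -
  have wn: "w permutes {1..n}" using permutes_subset[OF w] k by auto
  obtain ws where ws: "red n ws" "perm_of_word ws = w" using exists_red[OF wn] by blast
  have tw: "Tw n T w = lprod (map T ws)" using Tw_red[OF wn ws] .
  have in_: "1 \<le> i" "i < n" using i k by auto
  have vk: "sw i \<circ> w permutes {1..k}" using i by (intro permutes_compose[OF w] permutes_swap_id) auto
  have vn: "sw i \<circ> w permutes {1..n}" using sw_comp_permutes[OF wn in_] .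
  show ?thesis
  proof (cases "inv w (Suc i) < inv w i")
    case False
    have st: "Ninv n (sw i \<circ> w) = Ninv n w + 1" using Ninv_step(2)[OF wn in_ False] .
    have r: "red n (i # ws)" using ws st in_ by (auto simp: red_def)
    have "Tw n T (sw i \<circ> w) = lprod (map T (i # ws))" using Tw_red[OF vn r] ws by simp
    then have "T i * Tw n T w = Tw n T (sw i \<circ> w)" using tw by simp
    then show ?thesis using vk by (auto intro!: rsp_gen1)
  next
    case True
    obtain zs where zs: "red n zs" "perm_of_word zs = sw i \<circ> w" using exists_red[OF vn] by blast
    have r: "red n (i # zs)" "perm_of_word (i # zs) = w" using red_Cons[OF zs(1) in_ zs(2) wn True] by auto
    have tv: "Tw n T (sw i \<circ> w) = lprod (map T zs)" using Tw_red[OF vn zs] .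
    have "Tw n T w = T i * Tw n T (sw i \<circ> w)" using Tw_red[OF wn r(1) r(2)] tv by simp
    then have "T i * Tw n T w = (T i * T i) * Tw n T (sw i \<circ> w)" by (simp add: mult.assoc)
    also have "\<dots> = E (1 - q) * (T i * Tw n T (sw i \<circ> w)) + E q * Tw n T (sw i \<circ> w)"
      using Tsq[OF in_] by (simp add: distrib_right mult.assoc)
    also have "\<dots> = E (1 - q) * Tw n T w + E q * Tw n T (sw i \<circ> w)"
      using \<open>Tw n T w = T i * Tw n T (sw i \<circ> w)\<close> by simp
    finally have eq: "T i * Tw n T w = E (1 - q) * Tw n T w + E q * Tw n T (sw i \<circ> w)" .
    have "E (1 - q) * Tw n T w \<in> rsp emb {Tw n T v | v. v permutes {1..k}}"
      by (rule rsp_gen) (use w in blast)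
    moreover have "E q * Tw n T (sw i \<circ> w) \<in> rsp emb {Tw n T v | v. v permutes {1..k}}"
      by (rule rsp_gen) (use vk in blast)
    ultimately show ?thesis unfolding eq by (rule rsp_add)
  qed
qed

lemma Hecke_span:
  assumes k: "k \<le> n"
  shows "set ws \<subseteq> {1..<k} \<Longrightarrow> lprod (map T ws) \<in> rsp emb {Tw n T v | v. v permutes {1..k}}"
proof (induction ws)
  case Nil
  have "Tw n T id = lprod (map T [])"
    by (rule Tw_red) (auto simp: red_def permutes_id)
  then have "1 = Tw n T id" by simp
  then show ?case by (auto intro!: rsp_gen1 permutes_id)
next
  case (Cons i ws)
  then have i: "1 \<le> i" "i < k" and ws: "lprod (map T ws) \<in> rsp emb {Tw n T v | v. v permutes {1..k}}" by auto
  have "T i * lprod (map T ws) \<in> rsp emb {Tw n T v | v. v permutes {1..k}}"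
    by (rule rsp_lmult[OF _ ws]) (use Tgen[OF k _ i] in blast)
  then show ?case by simp
qed

lemma Hk_span: "k \<le> n \<Longrightarrow> x \<in> Hk k \<Longrightarrow> x \<in> rsp emb {Tw n T v | v. v permutes {1..k}}"
  unfolding Hk_def
proof (rule rsp_sub)
  fix y assume "k \<le> n" "y \<in> {lprod (map T ws) |ws. set ws \<subseteq> {1..<k}}"
  then show "y \<in> rsp emb {Tw n T v | v. v permutes {1..k}}" using Hecke_span by blast
qed

subsection \<open>Moving L through a cycle\<close>

definition Ti' :: "nat \<Rightarrow> 'a" where "Ti' x = E qinv * (T x + E q - 1)"

lemma Ti'_T: "1 \<le> x \<Longrightarrow> x < n \<Longrightarrow> Ti' x * T x = 1"
  unfolding Ti'_def using Tinv'[of x] qq' by (simp add: mult.assoc)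

lemma Ti'_Hk: "1 \<le> x \<Longrightarrow> x < m \<Longrightarrow> Ti' x \<in> Hk m"
  unfolding Ti'_def by (intro Hk_smult Hk_diff[OF Hk_add[OF Hk_T Hk_E] Hk_one])

lemma lprod_inv: "set xs \<subseteq> {1..<n} \<Longrightarrow> lprod (map Ti' (rev xs)) * lprod (map T xs) = 1"
proof (induction xs)
  case Nil then show ?case by simp
next
  case (Cons x xs)
  have "lprod (map Ti' (rev (x # xs))) * lprod (map T (x # xs)) =
      lprod (map Ti' (rev xs)) * (Ti' x * T x) * lprod (map T xs)" by (simp add: mult.assoc)
  also have "\<dots> = 1" using Cons Ti'_T[of x] by simp
  finally show ?case .
qed

lemma Tij_split:
  assumes "s \<le> k" "k \<le> e"
  shows "Tij T s e = lprod (map T [s..<k]) * T k * lprod (map T [Suc k..<Suc e])"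
proof -
  have "[s..<Suc e] = [s..<k] @ [k..<Suc e]" using assms
    by (metis le_SucI upt_add_eq_append le_add_diff_inverse)
  moreover have "[k..<Suc e] = k # [Suc k..<Suc e]" using assms by (simp add: upt_conv_Cons)
  ultimately show ?thesis by (simp add: Tij_def mult.assoc)
qed

lemma cycle:
  assumes s: "1 \<le> s" "s \<le> k" and e: "k \<le> e" "e < n" and h: "h \<in> Hk k"
  shows "\<exists>h'' \<in> Hk (Suc k). Tij T s e * (L k - E Q + L k * h) = (L (Suc k) - E Q + L (Suc k) * h'') * Tij T s e"
proof -
  define A where "A = lprod (map T [s..<k])"
  define B where "B = lprod (map T [Suc k..<Suc e])"
  have C: "Tij T s e = A * T k * B" unfolding A_def B_def using Tij_split[OF s(2) e(1)] .
  have k1: "1 \<le> k" "k < n" using s e by auto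
  have cBL: "cm (L k) B" unfolding B_def
  proof (rule cm_lprod)
    fix y assume "y \<in> set (map T [Suc k..<Suc e])"
    then obtain x where x: "y = T x" "Suc k \<le> x" "x \<le> e" by auto
    then have "cm (T x) (L k)" using k1 e by (intro Ti_L_low) auto
    then show "cm (L k) y" using x cm_sym by blast
  qed
  have cBh: "cm B h"
  proof (rule Hk_cm[OF h])
    fix i assume i: "1 \<le> i" "i < k"
    have "cm (T i) B" unfolding B_def
    proof (rule cm_lprod)
      fix y assume "y \<in> set (map T [Suc k..<Suc e])"
      then obtain x where x: "y = T x" "Suc k \<le> x" "x \<le> e" by auto
      then show "cm (T i) y" using i e by (auto intro: cmT)
    qed
    then show "cm B (T i)" using cm_sym by blast
  qed
  have cA: "cm (L (Suc k)) A" unfolding A_def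
  proof (rule cm_lprod)
    fix y assume "y \<in> set (map T [s..<k])"
    then obtain x where x: "y = T x" "s \<le> x" "x < k" by auto
    then have "cm (T x) (L (Suc k))" using s e by (intro Ti_L_high) auto
    then show "cm (L (Suc k)) y" using x cm_sym by blast
  qed
  have TLk: "T k * L k = L (Suc k) * (T k + E q - 1)" using TL[OF k1] .
  have key: "Tij T s e * (L k * (1 + h)) = L (Suc k) * (A * (T k + E q - 1) * (1 + h) * B)"
  proof -
    have B1: "B * (1 + h) = (1 + h) * B" using cBh by (simp add: cm_def algebra_simps)
    have bl: "B * L k = L k * B" using cBL by (simp add: cm_def)
    have al: "A * L (Suc k) = L (Suc k) * A" using cA by (simp add: cm_def)
    have "Tij T s e * (L k * (1 + h)) = A * T k * (B * L k) * (1 + h)" unfolding C by (simp only: mult.assoc)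
    also have "\<dots> = A * T k * (L k * B) * (1 + h)" by (simp only: bl)
    also have "\<dots> = A * (T k * L k) * (B * (1 + h))" by (simp only: mult.assoc)
    also have "\<dots> = A * (L (Suc k) * (T k + E q - 1)) * ((1 + h) * B)" by (simp only: TLk B1)
    also have "\<dots> = (A * L (Suc k)) * ((T k + E q - 1) * ((1 + h) * B))" by (simp only: mult.assoc)
    also have "\<dots> = (L (Suc k) * A) * ((T k + E q - 1) * ((1 + h) * B))" by (simp only: al)
    also have "\<dots> = L (Suc k) * (A * (T k + E q - 1) * (1 + h) * B)" by (simp only: mult.assoc)
    finally show ?thesis .
  qed
  define U where "U = lprod (map Ti' (rev [s..<Suc k]))"
  have AT: "A * T k = lprod (map T [s..<Suc k])" unfolding A_def using s by simp
  have UAT: "U * (A * T k) = 1" unfolding U_def AT using k1 s by (intro lprod_inv) auto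
  define h'' where "h'' = A * (T k + E q - 1) * (1 + h) * U - 1"
  have hC: "(1 + h'') * Tij T s e = A * (T k + E q - 1) * (1 + h) * B"
  proof -
    have "(1 + h'') * Tij T s e = A * (T k + E q - 1) * (1 + h) * (U * (A * T k)) * B"
      unfolding h''_def C by (simp add: mult.assoc)
    then show ?thesis unfolding UAT by simp
  qed
  have EQ: "Tij T s e * E Q = E Q * Tij T s e" by (rule cen[symmetric])
  have "Tij T s e * (L k - E Q + L k * h) = Tij T s e * (L k * (1 + h)) - Tij T s e * E Q"
    by (simp add: algebra_simps)
  also have "\<dots> = L (Suc k) * ((1 + h'') * Tij T s e) - E Q * Tij T s e" unfolding key hC EQ ..
  also have "\<dots> = (L (Suc k) - E Q + L (Suc k) * h'') * Tij T s e" by (simp add: algebra_simps)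
  finally have eq: "Tij T s e * (L k - E Q + L k * h) = (L (Suc k) - E Q + L (Suc k) * h'') * Tij T s e" .
  have "A \<in> Hk (Suc k)" unfolding A_def using s by (intro Hk_word) auto
  moreover have "T k + E q - 1 \<in> Hk (Suc k)"
  proof -
    have "T k \<in> Hk (Suc k)" by (rule Hk_T) (use k1 in auto)
    then show ?thesis by (intro Hk_diff[OF Hk_add[OF _ Hk_E] Hk_one])
  qed
  moreover have "1 + h \<in> Hk (Suc k)" by (rule Hk_add[OF Hk_one Hk_mono[OF _ h]]) simp
  moreover have "U \<in> Hk (Suc k)" unfolding U_def
  proof (rule Hk_lprod)
    fix y assume "y \<in> set (map Ti' (rev [s..<Suc k]))"
    then obtain x where "y = Ti' x" "s \<le> x" "x < Suc k" by auto
    then show "y \<in> Hk (Suc k)" using s Ti'_Hk[of x "Suc k"] by auto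
  qed
  ultimately have "h'' \<in> Hk (Suc k)" unfolding h''_def by (intro Hk_diff[OF Hk_mult[OF Hk_mult[OF Hk_mult]] Hk_one])
  then show ?thesis using eq by blast
qed

lemma Twab_Suc: assumes "1 \<le> b" shows "Twab T (Suc a) b = Tij T (Suc a) (a + b) * Twab T a b"
proof -
  have u: "[0..<Suc a] = 0 # map Suc [0..<a]" by (simp add: upt_conv_Cons map_Suc_upt)
  have "Twab T (Suc a) b = lprod (map (\<lambda>t. Tij T (Suc a - t) (Suc a + b - 1 - t)) [0..<Suc a])"
    using assms by (simp add: Twab_def)
  also have "\<dots> = Tij T (Suc a) (a + b) * lprod (map (\<lambda>t. Tij T (a - t) (a + b - 1 - t)) [0..<a])"
    unfolding u using assms by (simp add: o_def)
  also have "\<dots> = Tij T (Suc a) (a + b) * Twab T a b"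
    using assms by (cases "a = 0") (simp_all add: Twab_def)
  finally show ?thesis .
qed

lemma single:
  assumes b: "1 \<le> b" and j: "1 \<le> j" "j \<le> b"
  shows "a + b \<le> n \<Longrightarrow> \<exists>h \<in> Hk (a + j). Twab T a b * (L j - E Q) = (L (a + j) - E Q + L (a + j) * h) * Twab T a b"
proof (induction a)
  case 0
  have "Twab T 0 b = 1" by (simp add: Twab_def)
  then show ?case using Hk_zero by force
next
  case (Suc a)
  then obtain h where h: "h \<in> Hk (a + j)" "Twab T a b * (L j - E Q) = (L (a + j) - E Q + L (a + j) * h) * Twab T a b"
    by auto
  obtain h'' where h'': "h'' \<in> Hk (Suc (a + j))"
    "Tij T (Suc a) (a + b) * (L (a + j) - E Q + L (a + j) * h) = (L (Suc (a + j)) - E Q + L (Suc (a + j)) * h'') * Tij T (Suc a) (a + b)"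
    using cycle[of "Suc a" "a + j" "a + b" h Q] h(1) j Suc.prems by auto
  have "Twab T (Suc a) b * (L j - E Q) = Tij T (Suc a) (a + b) * (Twab T a b * (L j - E Q))"
    using Twab_Suc[OF b] by (simp add: mult.assoc)
  also have "\<dots> = (Tij T (Suc a) (a + b) * (L (a + j) - E Q + L (a + j) * h)) * Twab T a b"
    unfolding h(2) by (simp add: mult.assoc)
  also have "\<dots> = (L (Suc a + j) - E Q + L (Suc a + j) * h'') * Twab T (Suc a) b"
    unfolding h''(2) Twab_Suc[OF b] by (simp add: mult.assoc)
  finally show ?case using h''(1) by auto
qed


definition Pc :: "nat \<Rightarrow> (nat \<Rightarrow> nat) \<Rightarrow> 'a" where
  "Pc m c = lprod (map (\<lambda>i. L i ^ c i) [1..<m])"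

definition GS :: "nat \<Rightarrow> nat \<Rightarrow> 'a set" where
  "GS m t = {Pc m c * lprod (map T ws) | c ws. (\<forall>i. c i \<le> 1) \<and> (\<forall>i. t \<le> i \<longrightarrow> c i = 0) \<and> set ws \<subseteq> {1..<m}}"

definition G :: "nat \<Rightarrow> nat \<Rightarrow> 'a set" where "G m t = rsp emb (GS m t)"

lemma lprod_ext: "k \<le> m \<Longrightarrow> (\<And>i. k \<le> i \<Longrightarrow> f i = 1) \<Longrightarrow> lprod (map f [1..<m]) = lprod (map f [1..<k])"
proof (induction m rule: dec_induct)
  case base then show ?case by simp
next
  case (step m)
  then show ?case by (cases "1 \<le> m") auto
qed

lemma Pc_zero: "Pc m (\<lambda>_. 0) = 1" unfolding Pc_def by (rule lprod_ones) simp

lemma Hk_G: "x \<in> Hk m \<Longrightarrow> x \<in> G m t"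
  unfolding Hk_def G_def
proof (rule rsp_sub)
  fix y assume "y \<in> {lprod (map T ws) |ws. set ws \<subseteq> {1..<m}}"
  then obtain ws where "y = lprod (map T ws)" "set ws \<subseteq> {1..<m}" by blast
  then have "y = Pc m (\<lambda>_. 0) * lprod (map T ws)" "set ws \<subseteq> {1..<m}" by (auto simp: Pc_zero)
  then have "y \<in> GS m t" unfolding GS_def by blast
  then show "y \<in> rsp emb (GS m t)" by (rule rsp_gen1)
qed

lemma G_mono_t: "t \<le> t' \<Longrightarrow> x \<in> G m t \<Longrightarrow> x \<in> G m t'"
  unfolding G_def
proof (rule rsp_mono)
  assume "t \<le> t'"
  then show "GS m t \<subseteq> GS m t'" unfolding GS_def by fastforce
qed

lemma G_mono_m: assumes "t \<le> k" "k \<le> m" "x \<in> G k t" shows "x \<in> G m t"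
  using assms(3) unfolding G_def
proof (rule rsp_mono[rotated])
  show "GS k t \<subseteq> GS m t"
  proof
    fix y assume "y \<in> GS k t"
    then obtain c ws where y: "y = Pc k c * lprod (map T ws)" "\<forall>i. c i \<le> 1" "\<forall>i. t \<le> i \<longrightarrow> c i = 0" "set ws \<subseteq> {1..<k}"
      unfolding GS_def by blast
    have "Pc m c = Pc k c" unfolding Pc_def using assms y(3) by (intro lprod_ext) auto
    then have "y = Pc m c * lprod (map T ws)" "set ws \<subseteq> {1..<m}" using y assms by auto
    then show "y \<in> GS m t" unfolding GS_def using y(2,3) by blast
  qed
qed

lemma G_L: assumes t: "1 \<le> t" "t < m" "m \<le> n" and x: "x \<in> G m t" shows "L t * x \<in> G m (Suc t)"
  using x unfolding G_def
proof (rule rsp_lmult[rotated])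
  fix y assume "y \<in> GS m t"
  then obtain c ws where y: "y = Pc m c * lprod (map T ws)" "\<forall>i. c i \<le> 1" "\<forall>i. t \<le> i \<longrightarrow> c i = 0" "set ws \<subseteq> {1..<m}"
    unfolding GS_def by blast
  define c' where "c' = c(t := 1)"
  have s1: "[1..<m] = [1..<t] @ [t..<m]" using upt_add_eq_append[of 1 t "m - t"] t by simp
  have s2: "[t..<m] = t # [Suc t..<m]" using t by (simp add: upt_conv_Cons)
  have split: "[1..<m] = [1..<t] @ t # [Suc t..<m]" using s1 s2 by simp
  have P1: "lprod (map (\<lambda>i. L i ^ c' i) [1..<t]) = lprod (map (\<lambda>i. L i ^ c i) [1..<t])"
    unfolding c'_def by (rule arg_cong[where f=lprod]) auto
  have o1: "lprod (map (\<lambda>i. L i ^ c i) [Suc t..<m]) = 1" using y(3) by (intro lprod_ones) auto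
  have o2: "lprod (map (\<lambda>i. L i ^ c' i) [Suc t..<m]) = 1" using y(3) unfolding c'_def by (intro lprod_ones) auto
  have Pm: "Pc m c = lprod (map (\<lambda>i. L i ^ c i) [1..<t])" unfolding Pc_def split using y(3) o1 by simp
  have Pm': "Pc m c' = lprod (map (\<lambda>i. L i ^ c i) [1..<t]) * L t" unfolding Pc_def split using o2 P1
    by (simp add: c'_def)
  have cmL: "cm (L t) (lprod (map (\<lambda>i. L i ^ c i) [1..<t]))"
  proof (rule cm_lprod)
    fix z assume "z \<in> set (map (\<lambda>i. L i ^ c i) [1..<t])"
    then obtain i where "z = L i ^ c i" "1 \<le> i" "i < t" by auto
    then show "cm (L t) z" using t by (auto intro!: cm_power L_comm')
  qed
  have cl: "L t * lprod (map (\<lambda>i. L i ^ c i) [1..<t]) = lprod (map (\<lambda>i. L i ^ c i) [1..<t]) * L t"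
    using cmL by (simp add: cm_def)
  have "L t * y = (L t * lprod (map (\<lambda>i. L i ^ c i) [1..<t])) * lprod (map T ws)"
    unfolding y(1) Pm by (simp only: mult.assoc)
  also have "\<dots> = Pc m c' * lprod (map T ws)" unfolding cl Pm' ..
  finally have "L t * y = Pc m c' * lprod (map T ws)" .
  moreover have "\<forall>i. c' i \<le> 1" "\<forall>i. Suc t \<le> i \<longrightarrow> c' i = 0" using y(2,3) by (auto simp: c'_def)
  ultimately have "L t * y \<in> GS m (Suc t)" unfolding GS_def using y(4) by blast
  then show "L t * y \<in> rsp emb (GS m (Suc t))" by (rule rsp_gen1)
qed

lemma G_Hk: assumes "x \<in> G m t" "y \<in> Hk m" shows "x * y \<in> G m t"
  unfolding G_def
proof (rule rsp_mult[OF _ assms(1)[unfolded G_def] assms(2)[unfolded Hk_def]])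
  fix u v assume uu: "u \<in> GS m t" and vv: "v \<in> {lprod (map T ws) |ws. set ws \<subseteq> {1..<m}}"
  obtain c ws where u: "u = Pc m c * lprod (map T ws)" "\<forall>i. c i \<le> 1" "\<forall>i. t \<le> i \<longrightarrow> c i = 0" "set ws \<subseteq> {1..<m}"
    using uu unfolding GS_def by blast
  obtain vs where v: "v = lprod (map T vs)" "set vs \<subseteq> {1..<m}" using vv by blast
  have "u * v = Pc m c * lprod (map T (ws @ vs))" using u v by (simp add: mult.assoc)
  moreover have "set (ws @ vs) \<subseteq> {1..<m}" using u v by simp
  ultimately have "u * v \<in> GS m t" unfolding GS_def using u(2,3) by blast
  then show "u * v \<in> rsp emb (GS m t)" by (rule rsp_gen1)
qed

lemma G_add: "x \<in> G m t \<Longrightarrow> y \<in> G m t \<Longrightarrow> x + y \<in> G m t" unfolding G_def by (rule rsp_add)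
lemma G_diff: "x \<in> G m t \<Longrightarrow> y \<in> G m t \<Longrightarrow> x - y \<in> G m t" unfolding G_def by (rule rsp_diff)
lemma G_smult: "x \<in> G m t \<Longrightarrow> E c * x \<in> G m t" unfolding G_def by (rule rsp_smult)
lemma G_uminus: "x \<in> G m t \<Longrightarrow> - x \<in> G m t" unfolding G_def by (rule rsp_uminus)
lemma G_sum: "finite I \<Longrightarrow> (\<And>i. i \<in> I \<Longrightarrow> f i \<in> G m t) \<Longrightarrow> sum f I \<in> G m t"
  unfolding G_def by (rule rsp_sum)

lemma G_cm: assumes x: "x \<in> G k k" and km: "k < m" "m \<le> n" shows "cm (L m) x"
  using x unfolding G_def
proof (rule rsp_cm[rotated])
  fix y assume "y \<in> GS k k"
  then obtain c ws where y: "y = Pc k c * lprod (map T ws)" "set ws \<subseteq> {1..<k}"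
    unfolding GS_def by blast
  have "cm (L m) (Pc k c)" unfolding Pc_def
  proof (rule cm_lprod)
    fix z assume "z \<in> set (map (\<lambda>i. L i ^ c i) [1..<k])"
    then obtain i where "z = L i ^ c i" "1 \<le> i" "i < k" by auto
    then show "cm (L m) z" using km by (auto intro!: cm_power L_comm')
  qed
  moreover have "cm (L m) (lprod (map T ws))"
  proof (rule cm_lprod)
    fix z assume "z \<in> set (map T ws)"
    then obtain i where i: "z = T i" "1 \<le> i" "i < k" using y(2) by auto
    then have "cm (T i) (L m)" using km by (intro Ti_L_high) auto
    then show "cm (L m) z" using i cm_sym by blast
  qed
  ultimately show "cm (L m) y" unfolding y(1) by (rule cm_mult)
qed

lemma cm_LQ: "1 \<le> i \<Longrightarrow> i \<le> n \<Longrightarrow> 1 \<le> j \<Longrightarrow> j \<le> n \<Longrightarrow> cm (L j - E Q) (L i - E Q)"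
proof -
  assume a: "1 \<le> i" "i \<le> n" "1 \<le> j" "j \<le> n"
  have "cm (L i) (L j - E Q)" using a by (intro cm_diff L_comm' cm_E) auto
  then have "cm (L j - E Q) (L i)" using cm_sym by blast
  moreover have "cm (L j - E Q) (E Q)" by (rule cm_E)
  ultimately show ?thesis by (rule cm_diff)
qed

lemma cm_Lprod: assumes "1 \<le> x" "y \<le> n" shows "cm (L y - E Q) (lprod (map (\<lambda>i. L i - E Q) [x..<y]))"
proof (rule cm_lprod)
  fix z assume "z \<in> set (map (\<lambda>i. L i - E Q) [x..<y])"
  then obtain i where i: "z = L i - E Q" "x \<le> i" "i < y" by auto
  then show "cm (L y - E Q) z" using assms cm_LQ[of i y] by auto
qed

lemma G_Lprod:
  assumes x: "1 \<le> x" "x \<le> y" and m: "y \<le> m" "m \<le> n" and g: "g \<in> G m x"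
  shows "lprod (map (\<lambda>i. L i - E Q) [x..<y]) * g \<in> G m y"
  using x(2) m(1)
proof (induction y rule: dec_induct)
  case base then show ?case using g by simp
next
  case (step y)
  have IH: "lprod (map (\<lambda>i. L i - E Q) [x..<y]) * g \<in> G m y" using step by simp
  have c: "cm (L y - E Q) (lprod (map (\<lambda>i. L i - E Q) [x..<y]))" using x step m by (intro cm_Lprod) auto
  have c': "lprod (map (\<lambda>i. L i - E Q) [x..<y]) * (L y - E Q) = (L y - E Q) * lprod (map (\<lambda>i. L i - E Q) [x..<y])"
    using c by (simp add: cm_def)
  have "lprod (map (\<lambda>i. L i - E Q) [x..<Suc y]) * g = (lprod (map (\<lambda>i. L i - E Q) [x..<y]) * (L y - E Q)) * g"
    using step(1) by (simp add: mult.assoc)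
  also have "\<dots> = (L y - E Q) * (lprod (map (\<lambda>i. L i - E Q) [x..<y]) * g)" unfolding c' by (simp only: mult.assoc)
  finally have "lprod (map (\<lambda>i. L i - E Q) [x..<Suc y]) * g = (L y - E Q) * (lprod (map (\<lambda>i. L i - E Q) [x..<y]) * g)" .
  also have "\<dots> = L y * (lprod (map (\<lambda>i. L i - E Q) [x..<y]) * g) - E Q * (lprod (map (\<lambda>i. L i - E Q) [x..<y]) * g)"
    by (simp add: left_diff_distrib)
  also have "\<dots> \<in> G m (Suc y)"
  proof (rule G_diff)
    show "L y * (lprod (map (\<lambda>i. L i - E Q) [x..<y]) * g) \<in> G m (Suc y)"
      using x step m by (intro G_L IH) auto
    show "E Q * (lprod (map (\<lambda>i. L i - E Q) [x..<y]) * g) \<in> G m (Suc y)"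
      by (rule G_mono_t[of y], simp, rule G_smult[OF IH])
  qed
  finally show ?case .
qed

lemma prodL:
  assumes ab: "a + b \<le> n" and c: "1 \<le> c"
  shows "c + t \<le> b + 1 \<Longrightarrow> \<exists>h. (\<forall>k\<in>{a+c..<a+c+t}. h k \<in> G k k) \<and>
    Twab T a b * lprod (map (\<lambda>i. L i - E Q) [c..<c+t]) =
      (lprod (map (\<lambda>i. L i - E Q) [a+c..<a+c+t]) + (\<Sum>k\<in>{a+c..<a+c+t}. L k * h k)) * Twab T a b"
proof (induction t)
  case 0
  show ?case by (rule exI[of _ "\<lambda>_. 0"]) simp
next
  case (Suc t)
  then obtain h where h: "\<forall>k\<in>{a+c..<a+c+t}. h k \<in> G k k"
    "Twab T a b * lprod (map (\<lambda>i. L i - E Q) [c..<c+t]) =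
      (lprod (map (\<lambda>i. L i - E Q) [a+c..<a+c+t]) + (\<Sum>k\<in>{a+c..<a+c+t}. L k * h k)) * Twab T a b"
    by auto
  define m where "m = a + c + t"
  have bj: "1 \<le> b" "1 \<le> c + t" "c + t \<le> b" using Suc.prems c by auto
  obtain g where g: "g \<in> Hk m" "Twab T a b * (L (c + t) - E Q) = (L m - E Q + L m * g) * Twab T a b"
    using single[OF bj ab, of Q] unfolding m_def by (auto simp: add.assoc)
  have mn: "m \<le> n" "1 \<le> m" "a + c \<le> m" using ab bj c unfolding m_def by auto
  define A where "A = lprod (map (\<lambda>i. L i - E Q) [a+c..<m])"
  define S where "S = (\<Sum>k\<in>{a+c..<m}. L k * h k)"
  define h' where "h' = (\<lambda>k. if k = m then A * g + (\<Sum>k'\<in>{a+c..<m}. L k' * h k' + L k' * h k' * g) else - (E Q * h k))"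
  have hG: "\<And>k. k \<in> {a+c..<m} \<Longrightarrow> h k \<in> G k k" using h(1) unfolding m_def by auto
  have AL: "A * L m = L m * A"
  proof -
    have "cm (L m) A" unfolding A_def
    proof (rule cm_lprod)
      fix z assume "z \<in> set (map (\<lambda>i. L i - E Q) [a+c..<m])"
      then obtain i where i: "z = L i - E Q" "a + c \<le> i" "i < m" by auto
      then show "cm (L m) z" using mn c by (auto intro!: cm_diff cm_E L_comm')
    qed
    then show ?thesis unfolding cm_def by (rule sym)
  qed
  have SL: "S * L m = L m * S" unfolding S_def sum_distrib_left sum_distrib_right
  proof (rule sum.cong[OF refl])
    fix k assume k: "k \<in> {a+c..<m}"
    have "cm (L m) (L k)" using k mn c by (intro L_comm') auto
    moreover have "cm (L m) (h k)" using k mn hG by (intro G_cm[of _ k]) auto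
    ultimately have "cm (L m) (L k * h k)" by (rule cm_mult)
    then show "L k * h k * L m = L m * (L k * h k)" by (simp add: cm_def)
  qed
  have SQ: "S * E Q = (\<Sum>k\<in>{a+c..<m}. L k * (E Q * h k))" unfolding S_def sum_distrib_right
  proof (rule sum.cong[OF refl])
    fix k
    have "h k * E Q = E Q * h k" by (rule cen[symmetric])
    then show "L k * h k * E Q = L k * (E Q * h k)" by (simp add: mult.assoc)
  qed
  have Sg: "(\<Sum>k'\<in>{a+c..<m}. L k' * h k' + L k' * h k' * g) = S + S * g"
    unfolding S_def by (simp add: sum.distrib sum_distrib_right)
  have sumh': "(\<Sum>k\<in>{a+c..<Suc m}. L k * h' k) = - (\<Sum>k\<in>{a+c..<m}. L k * (E Q * h k)) + L m * (A * g + (S + S * g))"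
  proof -
    have "(\<Sum>k\<in>{a+c..<Suc m}. L k * h' k) = (\<Sum>k\<in>{a+c..<m}. L k * h' k) + L m * h' m"
      using mn by simp
    also have "(\<Sum>k\<in>{a+c..<m}. L k * h' k) = (\<Sum>k\<in>{a+c..<m}. - (L k * (E Q * h k)))"
      by (rule sum.cong) (auto simp: h'_def)
    also have "\<dots> = - (\<Sum>k\<in>{a+c..<m}. L k * (E Q * h k))" by (simp add: sum_negf)
    finally show ?thesis unfolding h'_def using Sg by simp
  qed
  have expand: "(A + S) * (L m - E Q + L m * g) = A * L m - A * E Q + (A * L m) * g + S * L m - S * E Q + (S * L m) * g"
    by (simp add: algebra_simps)
  have ident: "(A + S) * (L m - E Q + L m * g) = A * (L m - E Q) + (\<Sum>k\<in>{a+c..<Suc m}. L k * h' k)"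
    unfolding expand sumh' AL SL SQ by (simp add: algebra_simps AL)
  have lc: "[c..<c + Suc t] = [c..<c+t] @ [c + t]" by simp
  have la: "[a+c..<a + c + Suc t] = [a+c..<m] @ [m]" unfolding m_def by simp
  have "Twab T a b * lprod (map (\<lambda>i. L i - E Q) [c..<c + Suc t]) =
      (Twab T a b * lprod (map (\<lambda>i. L i - E Q) [c..<c+t])) * (L (c + t) - E Q)"
    unfolding lc by (simp add: mult.assoc)
  also have "\<dots> = (A + S) * (Twab T a b * (L (c + t) - E Q))"
    unfolding h(2) A_def S_def m_def by (simp add: mult.assoc)
  also have "\<dots> = ((A + S) * (L m - E Q + L m * g)) * Twab T a b" unfolding g(2) by (simp add: mult.assoc)
  also have "\<dots> = (A * (L m - E Q) + (\<Sum>k\<in>{a+c..<Suc m}. L k * h' k)) * Twab T a b"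
    unfolding ident ..
  also have "\<dots> = (lprod (map (\<lambda>i. L i - E Q) [a+c..<a + c + Suc t]) + (\<Sum>k\<in>{a+c..<a + c + Suc t}. L k * h' k)) * Twab T a b"
  proof -
    have "lprod (map (\<lambda>i. L i - E Q) [a+c..<a + c + Suc t]) = A * (L m - E Q)" unfolding la A_def by simp
    moreover have "a + c + Suc t = Suc m" unfolding m_def by simp
    ultimately show ?thesis by simp
  qed
  finally have eq: "Twab T a b * lprod (map (\<lambda>i. L i - E Q) [c..<c + Suc t]) =
      (lprod (map (\<lambda>i. L i - E Q) [a+c..<a + c + Suc t]) + (\<Sum>k\<in>{a+c..<a + c + Suc t}. L k * h' k)) * Twab T a b" .
  have memm: "h' m \<in> G m m"
  proof -
    have "A * g \<in> G m m" unfolding A_def using mn c by (intro G_Lprod Hk_G g(1)) auto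
    moreover have "(\<Sum>k'\<in>{a+c..<m}. L k' * h k' + L k' * h k' * g) \<in> G m m"
    proof (rule G_sum)
      fix k assume k: "k \<in> {a+c..<m}"
      have "h k \<in> G m k" using hG[OF k] k by (intro G_mono_m[of k k m]) auto
      then have "L k * h k \<in> G m (Suc k)" using k mn c by (intro G_L) auto
      then have 1: "L k * h k \<in> G m m" by (rule G_mono_t[of "Suc k" m, rotated]) (use k in auto)
      then have "L k * h k * g \<in> G m m" using g(1) by (rule G_Hk)
      then show "L k * h k + L k * h k * g \<in> G m m" using 1 by (intro G_add)
    qed simp
    ultimately show ?thesis unfolding h'_def by (simp add: G_add)
  qed
  have "\<forall>k\<in>{a+c..<a + c + Suc t}. h' k \<in> G k k"
  proof
    fix k assume k: "k \<in> {a+c..<a + c + Suc t}"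
    show "h' k \<in> G k k"
    proof (cases "k = m")
      case True then show ?thesis using memm by simp
    next
      case False
      then have "k \<in> {a+c..<m}" using k unfolding m_def by auto
      then show ?thesis using False hG unfolding h'_def by (auto intro: G_uminus G_smult)
    qed
  qed
  then show ?case using eq by blast
qed

lemma T0_r1: "r = 1 \<Longrightarrow> T 0 = E (Qs 1)"
proof -
  assume r: "r = 1"
  have "lprod (map (\<lambda>j. T 0 - emb (Qs j)) [1..<r+1]) = 0" using rels unfolding AK_rels_def by blast
  then show ?thesis using r by simp
qed

lemma L_Hk_r1: assumes "r = 1" "1 \<le> i" "i < k" shows "L i \<in> Hk k"
proof -
  have "L i = E (qinv ^ (i - 1)) * (lprod (map T (rev [1..<i])) * E (Qs 1) * lprod (map T [1..<i]))"
    unfolding L_def' using T0_r1[OF assms(1)] by (simp add: mult.assoc)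
  also have "\<dots> \<in> Hk k" using assms
    by (intro Hk_smult Hk_mult Hk_E Hk_word) auto
  finally show ?thesis .
qed

lemma G_Hkm:
  assumes k: "1 \<le> k" "k \<le> n" and r: "1 \<le> r" and x: "x \<in> G k k"
  shows "x \<in> Hkm emb n r qinv T (k - 1) k"
proof -
  define HS where "HS = {lprod (map (\<lambda>i. AK_L emb qinv T i ^ c i) [1..<k - 1 + 1]) * Tw n T w | c w.
        (\<forall>i\<in>{1..k - 1}. c i < r) \<and> w permutes {1..k}}"
  have kk: "k - 1 + 1 = k" using k by simp
  have Tw_HS: "\<And>w. w permutes {1..k} \<Longrightarrow> Tw n T w \<in> rsp emb HS"
  proof -
    fix w assume w: "w permutes {1..k}"
    have e: "Tw n T w = lprod (map (\<lambda>i. AK_L emb qinv T i ^ (\<lambda>_. 0::nat) i) [1..<k - 1 + 1]) * Tw n T w"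
      by (simp add: lprod_ones)
    have "Tw n T w \<in> HS" unfolding HS_def
      by (rule CollectI, rule exI[of _ "\<lambda>_. 0::nat"], rule exI[of _ w]) (use e w r in auto)
    then show "Tw n T w \<in> rsp emb HS" by (rule rsp_gen1)
  qed
  have Hk_HS: "\<And>y. y \<in> Hk k \<Longrightarrow> y \<in> rsp emb HS"
  proof -
    fix y assume "y \<in> Hk k"
    then have "y \<in> rsp emb {Tw n T v | v. v permutes {1..k}}" using Hk_span k by blast
    then show "y \<in> rsp emb HS" by (rule rsp_sub[rotated]) (use Tw_HS in blast)
  qed
  have "x \<in> rsp emb HS"
    using x unfolding G_def
  proof (rule rsp_sub[rotated])
    fix y assume "y \<in> GS k k"
    then obtain c ws where y: "y = Pc k c * lprod (map T ws)" "\<forall>i. c i \<le> 1" "set ws \<subseteq> {1..<k}"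
      unfolding GS_def by blast
    show "y \<in> rsp emb HS"
    proof (cases "r = 1")
      case True
      have "Pc k c \<in> Hk k" unfolding Pc_def
      proof (rule Hk_lprod)
        fix z assume "z \<in> set (map (\<lambda>i. L i ^ c i) [1..<k])"
        then obtain i where i: "z = L i ^ c i" "1 \<le> i" "i < k" by auto
        have Li: "L i \<in> Hk k" using L_Hk_r1[OF True i(2,3)] .
        have "L i ^ j \<in> Hk k" for j by (induction j) (auto intro: Hk_one Hk_mult[OF Li])
        then show "z \<in> Hk k" using i by simp
      qed
      then have "y \<in> Hk k" unfolding y(1) using y(3) by (intro Hk_mult Hk_word)
      then show ?thesis by (rule Hk_HS)
    next
      case False
      then have r2: "2 \<le> r" using r by auto
      have W: "lprod (map T ws) \<in> rsp emb {Tw n T v | v. v permutes {1..k}}"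
        using Hecke_span[OF k(2) y(3)] .
      have "Pc k c * lprod (map T ws) \<in> rsp emb HS"
      proof (rule rsp_lmult[OF _ W])
        fix u assume "u \<in> {Tw n T v | v. v permutes {1..k}}"
        then obtain v where v: "u = Tw n T v" "v permutes {1..k}" by blast
        have "Pc k c * u \<in> HS" unfolding HS_def Pc_def kk
          by (rule CollectI, rule exI[of _ c], rule exI[of _ v]) (use v y(2) r2 in \<open>auto intro: le_less_trans[of _ 1 r]\<close>)
        then show "Pc k c * u \<in> rsp emb HS" by (rule rsp_gen1)
      qed
      then show ?thesis using y(1) by simp
    qed
  qed
  then show ?thesis unfolding Hkm_def HS_def by (rule rsp_rspan)
qed

end

theorem lemma5p10:
  fixes emb :: "'r::idom \<Rightarrow> 'a::ring_1"
    and n r a b c d :: nat and q qinv Q :: 'r and Qs :: "nat \<Rightarrow> 'r" and T :: "nat \<Rightarrow> 'a"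
  assumes "1 \<le> n" "1 \<le> r"
    and "AK_rels emb n r q qinv Qs T"
    and "a + b \<le> n" "1 \<le> c" "c \<le> d" "d \<le> b"
  shows "\<exists>h :: nat \<Rightarrow> 'a.
     (\<forall>k\<in>{a+c..a+d}. h k \<in> Hkm emb n r qinv T (k - 1) k) \<and>
     Twab T a b * Lij emb qinv T c d Q =
       (Lij emb qinv T (a+c) (a+d) Q + (\<Sum>k = a+c..a+d. AK_L emb qinv T k * h k)) * Twab T a b"
proof -
  interpret AKc emb n r q qinv Qs T by unfold_locales (rule assms(3))
  define t where "t = d + 1 - c"
  have ct: "c + t = d + 1" "a + c + t = a + d + 1" using assms unfolding t_def by auto
  obtain h where h: "\<forall>k\<in>{a+c..<a+c+t}. h k \<in> G k k"
    "Twab T a b * lprod (map (\<lambda>i. L i - E Q) [c..<c+t]) =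
      (lprod (map (\<lambda>i. L i - E Q) [a+c..<a+c+t]) + (\<Sum>k\<in>{a+c..<a+c+t}. L k * h k)) * Twab T a b"
    using prodL[OF assms(4) assms(5), of t Q] ct assms by auto
  have set: "{a+c..<a+c+t} = {a+c..a+d}" using ct by auto
  have mem: "\<forall>k\<in>{a+c..a+d}. h k \<in> Hkm emb n r qinv T (k - 1) k"
  proof
    fix k assume k: "k \<in> {a+c..a+d}"
    then have "h k \<in> G k k" using h(1) set by auto
    then show "h k \<in> Hkm emb n r qinv T (k - 1) k" using k assms by (intro G_Hkm) auto
  qed
  have "Twab T a b * Lij emb qinv T c d Q =
       (Lij emb qinv T (a+c) (a+d) Q + (\<Sum>k = a+c..a+d. AK_L emb qinv T k * h k)) * Twab T a b"
  proof -
    have e1: "[c..<c+t] = [c..<d+1]" using ct(1) by (simp only:)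
    have e2: "[a+c..<a+c+t] = [a+c..<a+d+1]" using ct(2) by (simp only:)
    show ?thesis using h(2) unfolding Lij_def e1 e2 set .
  qed
  then show ?thesis using mem by blast
qed

end
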